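(* Consider the real-valued block-sparse setting in the context with Gaussian noise $w\sim N(0,\sigma^2 I_L)$, and let $x\in\mathcal{X}$. (a) If $x$ has fewer than $k$ nonzero blocks ($s<k$), then no estimator with finite variance is $\mathcal{X}$-unbiased at $x$. (b) If $x$ has exactly $k$ nonzero blocks ($s=k$), then every estimator $\hat x$ (with finite variance) that is $\mathcal{X}$-unbiased at $x$ satisfies $$\mathrm{MSE}(\hat x,x)\ge \sigma^2\,\mathrm{Tr}\big((D_S^TD_S)^{-1}\big).$$
   Context: Setting: $N=Md$. For $v\in\mathbb{R}^N$, $v[i]=(v_{(i-1)d+1},\dots,v_{id})^T$ is its $i$-th block; for a matrix $A$ with $N$ columns, $A[i]$ is the submatrix of columns $(i-1)d+1,\dots,id$. The block support is $\mathrm{supp}(v)=\{i:v[i]\ne0\}$; for $I=\{i_1<\dots<i_p\}$, $A_I=[A[i_1],\dots,A[i_p]]$. The constraint set is $\mathcal{X}=\{v\in\mathbb{R}^N: |\mathrm{supp}(v)|\le k\}$. The deterministic unknown $x\in\mathcal{X}$, $S=\mathrm{supp}(x)$, $s=|S|$. Observations $y=Dx+w$, $D\in\mathbb{R}^{L\times N}$ known with unit-norm columns, $L<N$, $D_I$ of full column rank whenever $|I|\le k$; $w\sim N(0,\sigma^2 I_L)$. An estimator is a (measurable) function $\hat x(y)$; its bias is $b(x)=\mathbb{E}_x[\hat x]-x$ and $\mathrm{MSE}(\hat x,x)=\mathbb{E}_x\|\hat x-x\|_2^2$, where $\mathbb{E}_x$ denotes expectation when the true parameter is $x$. A vector $v\in\mathbb{R}^N$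 is a feasible direction at $x$ if $x+\alpha v\in\mathcal{X}$ for all sufficiently small $|\alpha|$. An estimator $\hat x$ is $\mathcal{X}$-unbiased at $x$ if $\mathbb{E}_x[\hat x]=x$ and $\frac{\partial}{\partial\alpha}b(x+\alpha v)\big|_{\alpha=0}=0$ for every feasible direction $v$ at $x$. *)

theory Defs
  imports "HOL-Probability.Probability" "Jordan_Normal_Form.Matrix"
begin

(* Conventions: vectors of R^n are functions nat => real, only the entries 0..<n matter;
   indices are 0-based. Block i (i < M) of v in R^(M*d) consists of entries i*d ..< i*d+d.
   D :: nat => nat => real is the L x N matrix with entries D j l (j < L, l < N). *)

definition vecs :: "nat \<Rightarrow> (nat \<Rightarrow> real) set" where
  "vecs n = {v. \<forall>l\<ge>n. v l = 0}"

definition bsupp :: "nat \<Rightarrow> nat \<Rightarrow> (nat \<Rightarrow> real) \<Rightarrow> nat set" where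
  "bsupp M d v = {i. i < M \<and> (\<exists>j<d. v (i * d + j) \<noteq> 0)}"

definition Xset :: "nat \<Rightarrow> nat \<Rightarrow> nat \<Rightarrow> (nat \<Rightarrow> real) set" where
  "Xset M d k = {v \<in> vecs (M * d). card (bsupp M d v) \<le> k}"

definition feasible_dir :: "nat \<Rightarrow> nat \<Rightarrow> nat \<Rightarrow> (nat \<Rightarrow> real) \<Rightarrow> (nat \<Rightarrow> real) \<Rightarrow> bool" where
  "feasible_dir M d k x v \<longleftrightarrow> v \<in> vecs (M * d) \<and>
     (\<exists>\<epsilon>>0. \<forall>\<alpha>::real. \<bar>\<alpha>\<bar> < \<epsilon> \<longrightarrow> (\<lambda>l. x l + \<alpha> * v l) \<in> Xset M d k)"

definition matvec :: "nat \<Rightarrow> nat \<Rightarrow> (nat \<Rightarrow> nat \<Rightarrow> real) \<Rightarrow> (nat \<Rightarrow> real) \<Rightarrow> (nat \<Rightarrow> real)" where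
  "matvec L N D v = (\<lambda>j. if j < L then (\<Sum>l<N. D j l * v l) else 0)"

definition obs_space :: "nat \<Rightarrow> (nat \<Rightarrow> real) measure" where
  "obs_space L = PiM {..<L} (\<lambda>_. borel)"

definition noise :: "nat \<Rightarrow> real \<Rightarrow> (nat \<Rightarrow> real) measure" where
  "noise L \<sigma> = PiM {..<L} (\<lambda>_. density lborel (normal_density 0 \<sigma>))"

definition obs :: "nat \<Rightarrow> nat \<Rightarrow> (nat \<Rightarrow> nat \<Rightarrow> real) \<Rightarrow> real \<Rightarrow> (nat \<Rightarrow> real) \<Rightarrow> (nat \<Rightarrow> real) measure" where
  "obs L N D \<sigma> x = distr (noise L \<sigma>) (obs_space L)
      (\<lambda>w. restrict (\<lambda>j. matvec L N D x j + w j) {..<L})"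

definition estimator :: "nat \<Rightarrow> nat \<Rightarrow> ((nat \<Rightarrow> real) \<Rightarrow> (nat \<Rightarrow> real)) \<Rightarrow> bool" where
  "estimator L N xh \<longleftrightarrow> (\<forall>l<N. (\<lambda>y. xh y l) \<in> borel_measurable (obs_space L))"

definition finite_var :: "nat \<Rightarrow> nat \<Rightarrow> (nat \<Rightarrow> nat \<Rightarrow> real) \<Rightarrow> real \<Rightarrow> ((nat \<Rightarrow> real) \<Rightarrow> (nat \<Rightarrow> real)) \<Rightarrow> (nat \<Rightarrow> real) \<Rightarrow> bool" where
  "finite_var L N D \<sigma> xh x \<longleftrightarrow> (\<forall>l<N. integrable (obs L N D \<sigma> x) (\<lambda>y. (xh y l)\<^sup>2))"

definition bias :: "nat \<Rightarrow> nat \<Rightarrow> (nat \<Rightarrow> nat \<Rightarrow> real) \<Rightarrow> real \<Rightarrow> ((nat \<Rightarrow> real) \<Rightarrow> (nat \<Rightarrow> real)) \<Rightarrow> (nat \<Rightarrow> real) \<Rightarrow> nat \<Rightarrow> real" where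
  "bias L N D \<sigma> xh x l = (\<integral>y. xh y l \<partial>obs L N D \<sigma> x) - x l"

definition X_unbiased :: "nat \<Rightarrow> nat \<Rightarrow> nat \<Rightarrow> nat \<Rightarrow> (nat \<Rightarrow> nat \<Rightarrow> real) \<Rightarrow> real \<Rightarrow> ((nat \<Rightarrow> real) \<Rightarrow> (nat \<Rightarrow> real)) \<Rightarrow> (nat \<Rightarrow> real) \<Rightarrow> bool" where
  "X_unbiased L M d k D \<sigma> xh x \<longleftrightarrow>
     (\<forall>l<M * d. bias L (M * d) D \<sigma> xh x l = 0) \<and>
     (\<forall>v. feasible_dir M d k x v \<longrightarrow>
        (\<forall>l<M * d. ((\<lambda>\<alpha>. bias L (M * d) D \<sigma> xh (\<lambda>i. x i + \<alpha> * v i) l) has_real_derivative 0) (at 0)))"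

definition MSE :: "nat \<Rightarrow> nat \<Rightarrow> (nat \<Rightarrow> nat \<Rightarrow> real) \<Rightarrow> real \<Rightarrow> ((nat \<Rightarrow> real) \<Rightarrow> (nat \<Rightarrow> real)) \<Rightarrow> (nat \<Rightarrow> real) \<Rightarrow> real" where
  "MSE L N D \<sigma> xh x = (\<integral>y. (\<Sum>l<N. (xh y l - x l)\<^sup>2) \<partial>obs L N D \<sigma> x)"

definition block_cols :: "nat \<Rightarrow> nat \<Rightarrow> nat set \<Rightarrow> nat list" where
  "block_cols M d I = filter (\<lambda>l. l div d \<in> I) [0..<M * d]"

definition subD :: "nat \<Rightarrow> nat \<Rightarrow> nat \<Rightarrow> (nat \<Rightarrow> nat \<Rightarrow> real) \<Rightarrow> nat set \<Rightarrow> real mat" where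
  "subD L M d D I = (let cs = block_cols M d I in mat L (length cs) (\<lambda>(j, c). D j (cs ! c)))"

definition full_col_rank :: "real mat \<Rightarrow> bool" where
  "full_col_rank A \<longleftrightarrow> (\<forall>c \<in> carrier_vec (dim_col A). A *\<^sub>v c = 0\<^sub>v (dim_row A) \<longrightarrow> c = 0\<^sub>v (dim_col A))"

definition mat_inv :: "real mat \<Rightarrow> real mat" where
  "mat_inv A = (SOME B. inverts_mat A B \<and> inverts_mat B A)"

definition mat_trace :: "real mat \<Rightarrow> real" where
  "mat_trace A = (\<Sum>i<dim_row A. A $$ (i, i))"

end

theory Submission
  imports Defs "Jordan_Normal_Form.Determinant"
begin


definition GQ :: "nat \<Rightarrow> real \<Rightarrow> (nat \<Rightarrow> real) \<Rightarrow> (nat \<Rightarrow> real) measure" where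
  "GQ L \<sigma> a = PiM {..<L} (\<lambda>j. density lborel (normal_density (a j) \<sigma>))"

lemma Q_prob: "\<sigma> > 0 \<Longrightarrow> prob_space (GQ L \<sigma> a)"
  unfolding GQ_def by (rule prob_space_PiM) (rule prob_space_normal_density)

lemma Q_pps: "\<sigma> > 0 \<Longrightarrow> product_prob_space (\<lambda>j. density lborel (normal_density (a j) \<sigma>))"
  by (rule product_prob_spaceI) (rule prob_space_normal_density)

lemma Q_psf: "\<sigma> > 0 \<Longrightarrow> product_sigma_finite (\<lambda>j. density lborel (normal_density (a j) \<sigma>))"
  using Q_pps[of \<sigma> a] by (simp add: product_prob_space_def)

lemma nn_integral_lborel_shift:
  assumes [measurable]: "g \<in> borel_measurable borel"
  shows "(\<integral>\<^sup>+ y. g y \<partial>lborel) = (\<integral>\<^sup>+ w. g (m + w) \<partial>lborel)"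
proof -
  have "(\<integral>\<^sup>+ y. g y \<partial>lborel) = (\<integral>\<^sup>+ y. g y \<partial>distr lborel borel ((+) m))"
    by (simp add: lborel_distr_plus)
  also have "\<dots> = (\<integral>\<^sup>+ w. g (m + w) \<partial>lborel)"
    by (rule nn_integral_distr) measurable
  finally show ?thesis .
qed

lemma sets_Q: "sets (GQ L \<sigma> a) = sets (obs_space L)"
  unfolding GQ_def obs_space_def by (intro sets_PiM_cong) auto

lemma space_Q: "space (GQ L \<sigma> a) = space (obs_space L)"
  by (rule sets_eq_imp_space_eq[OF sets_Q])

lemma meas_Q[measurable_cong]: "measurable (GQ L \<sigma> a) N = measurable (obs_space L) N"
  by (rule measurable_cong_sets[OF sets_Q refl])

lemma nd_shift: "normal_density m \<sigma> (m + w) = normal_density 0 \<sigma> w"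
  by (simp add: normal_density_def)

lemma emeasure_nd_shift:
  assumes A: "A \<in> sets borel"
  shows "emeasure (density lborel (normal_density m \<sigma>)) A
       = emeasure (density lborel (normal_density 0 \<sigma>)) {w. m + w \<in> A}"
proof -
  have [measurable]: "A \<in> sets borel" by fact
  have "emeasure (density lborel (normal_density m \<sigma>)) A
     = (\<integral>\<^sup>+ y. ennreal (normal_density m \<sigma> y) * indicator A y \<partial>lborel)"
    by (simp add: emeasure_density)
  also have "\<dots> = (\<integral>\<^sup>+ w. ennreal (normal_density m \<sigma> (m + w)) * indicator A (m + w) \<partial>lborel)"
    by (rule nn_integral_lborel_shift) measurable
  also have "\<dots> = (\<integral>\<^sup>+ w. ennreal (normal_density 0 \<sigma> w) * indicator {w. m + w \<in> A} w \<partial>lborel)"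
    by (intro nn_integral_cong) (simp add: nd_shift indicator_def)
  also have "\<dots> = emeasure (density lborel (normal_density 0 \<sigma>)) {w. m + w \<in> A}"
  proof -
    have "(\<lambda>w. m + w) -` A \<in> sets borel"
      by (rule measurable_sets_borel[OF _ A]) simp
    then have "{w. m + w \<in> A} \<in> sets lborel" by (simp add: vimage_def)
    then show ?thesis by (subst emeasure_density) auto
  qed
  finally show ?thesis .
qed

lemma noise_shift: assumes sp: "\<sigma> > 0" shows
  "distr (noise L \<sigma>) (obs_space L) (\<lambda>w. restrict (\<lambda>j. m j + w j) {..<L}) = GQ L \<sigma> m"
proof -
  interpret P: product_sigma_finite "\<lambda>j. density lborel (normal_density (m j) \<sigma>)" by (rule Q_psf[OF sp])
  interpret N0: product_sigma_finite "\<lambda>j. density lborel (normal_density ((\<lambda>_. 0) j) \<sigma>)" by (rule Q_psf[OF sp])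
  have meas: "(\<lambda>w. restrict (\<lambda>j. m j + w j) {..<L}) \<in> measurable (noise L \<sigma>) (obs_space L)"
    unfolding noise_def obs_space_def by (rule measurable_restrict) measurable
  show ?thesis unfolding GQ_def
  proof (rule P.PiM_eqI)
    show "finite {..<L}" by simp
    show "sets (distr (noise L \<sigma>) (obs_space L) (\<lambda>w. restrict (\<lambda>j. m j + w j) {..<L}))
       = sets (Pi\<^sub>M {..<L} (\<lambda>j. density lborel (normal_density (m j) \<sigma>)))"
      unfolding sets_distr obs_space_def by (rule sets_PiM_cong) auto
    fix A assume A: "\<And>i. i \<in> {..<L} \<Longrightarrow> A i \<in> sets (density lborel (normal_density (m i) \<sigma>))"
    have Ab: "A i \<in> sets borel" if "i < L" for i using A[of i] that by auto
    have PiE_in: "Pi\<^sub>E {..<L} A \<in> sets (obs_space L)"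
      unfolding obs_space_def using Ab by (intro sets_PiM_I_finite) auto
    have pre: "(\<lambda>w. restrict (\<lambda>j. m j + w j) {..<L}) -` Pi\<^sub>E {..<L} A \<inter> space (noise L \<sigma>)
        = Pi\<^sub>E {..<L} (\<lambda>j. {w. m j + w \<in> A j})"
    proof -
      have sp: "space (noise L \<sigma>) = Pi\<^sub>E {..<L} (\<lambda>_. UNIV)" unfolding noise_def space_PiM by simp
      show ?thesis unfolding sp vimage_def PiE_iff by auto
    qed
    have "emeasure (distr (noise L \<sigma>) (obs_space L) (\<lambda>w. restrict (\<lambda>j. m j + w j) {..<L})) (Pi\<^sub>E {..<L} A)
       = emeasure (noise L \<sigma>) (Pi\<^sub>E {..<L} (\<lambda>j. {w. m j + w \<in> A j}))"
      by (subst emeasure_distr[OF meas PiE_in]) (simp only: pre)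
    also have "\<dots> = (\<Prod>j<L. emeasure (density lborel (normal_density 0 \<sigma>)) {w. m j + w \<in> A j})"
      unfolding noise_def
    proof (rule N0.emeasure_PiM)
      fix j assume "j \<in> {..<L}"
      then have "A j \<in> sets borel" using Ab by auto
      have "(\<lambda>w. m j + w) -` A j \<in> sets borel"
        by (rule measurable_sets_borel[OF _ \<open>A j \<in> sets borel\<close>]) simp
      then show "{w. m j + w \<in> A j} \<in> sets (density lborel (\<lambda>x. ennreal (normal_density 0 \<sigma> x)))"
        by (simp add: vimage_def)
    qed simp
    also have "\<dots> = (\<Prod>j<L. emeasure (density lborel (normal_density (m j) \<sigma>)) (A j))"
    proof (intro prod.cong refl)
      fix j assume "j \<in> {..<L}"
      then show "emeasure (density lborel (normal_density 0 \<sigma>)) {w. m j + w \<in> A j} =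
          emeasure (density lborel (normal_density (m j) \<sigma>)) (A j)"
        using emeasure_nd_shift[of "A j" "m j" \<sigma>] Ab by simp
    qed
    finally show "emeasure (distr (noise L \<sigma>) (obs_space L) (\<lambda>w. restrict (\<lambda>j. m j + w j) {..<L})) (Pi\<^sub>E {..<L} A)
       = (\<Prod>j\<in>{..<L}. emeasure (density lborel (normal_density (m j) \<sigma>)) (A j))" by simp
  qed
qed

definition grr :: "real \<Rightarrow> real \<Rightarrow> real \<Rightarrow> real \<Rightarrow> real" where
  "grr \<sigma> a \<delta> z = exp (\<delta> * (z - a) / \<sigma>\<^sup>2 - \<delta>\<^sup>2 / (2 * \<sigma>\<^sup>2))"

lemma rr_nonneg: "0 \<le> grr \<sigma> a \<delta> z" by (simp add: grr_def)

lemma nd_rr: assumes "\<sigma> > 0"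
  shows "normal_density (a + \<delta>) \<sigma> z = normal_density a \<sigma> z * grr \<sigma> a \<delta> z"
proof -
  have "-(z - (a + \<delta>))\<^sup>2 / (2 * \<sigma>\<^sup>2) = -(z - a)\<^sup>2 / (2 * \<sigma>\<^sup>2) + (\<delta> * (z - a) / \<sigma>\<^sup>2 - \<delta>\<^sup>2 / (2 * \<sigma>\<^sup>2))"
    using assms by (simp add: field_simps power2_eq_square)
  then have "exp (-(z - (a + \<delta>))\<^sup>2 / (2 * \<sigma>\<^sup>2)) = exp (-(z - a)\<^sup>2 / (2 * \<sigma>\<^sup>2)) * exp (\<delta> * (z - a) / \<sigma>\<^sup>2 - \<delta>\<^sup>2 / (2 * \<sigma>\<^sup>2))"
    by (simp only: exp_add)
  then show ?thesis
    unfolding normal_density_def grr_def by (simp only: mult.assoc)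
qed

definition grho :: "nat \<Rightarrow> real \<Rightarrow> (nat \<Rightarrow> real) \<Rightarrow> (nat \<Rightarrow> real) \<Rightarrow> (nat \<Rightarrow> real) \<Rightarrow> real" where
  "grho L \<sigma> a \<delta> y = (\<Prod>j<L. grr \<sigma> (a j) (\<delta> j) (y j))"

lemma rho_nonneg: "0 \<le> grho L \<sigma> a \<delta> y" unfolding grho_def by (intro prod_nonneg) (simp add: grr_def)

lemma rho_meas[measurable]: "grho L \<sigma> a \<delta> \<in> borel_measurable (obs_space L)"
  unfolding grho_def grr_def obs_space_def by measurable

lemma Q_shift: assumes sp: "\<sigma> > 0"
  shows "GQ L \<sigma> (\<lambda>j. a j + \<delta> j) = density (GQ L \<sigma> a) (\<lambda>y. ennreal (grho L \<sigma> a \<delta> y))"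
proof -
  interpret P: product_sigma_finite "\<lambda>j. density lborel (normal_density (a j + \<delta> j) \<sigma>)" by (rule Q_psf[OF sp])
  interpret P0: product_sigma_finite "\<lambda>j. density lborel (normal_density (a j) \<sigma>)" by (rule Q_psf[OF sp])
  have rm: "(\<lambda>y. ennreal (grho L \<sigma> a \<delta> y)) \<in> borel_measurable (GQ L \<sigma> a)"
    unfolding meas_Q by measurable
  show ?thesis unfolding GQ_def[of L \<sigma> "\<lambda>j. a j + \<delta> j"]
  proof (rule P.PiM_eqI[symmetric])
    show "finite {..<L}" by simp
    show "sets (density (GQ L \<sigma> a) (\<lambda>y. ennreal (grho L \<sigma> a \<delta> y)))
       = sets (Pi\<^sub>M {..<L} (\<lambda>j. density lborel (normal_density (a j + \<delta> j) \<sigma>)))"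
      unfolding sets_density GQ_def by (rule sets_PiM_cong) auto
    fix A assume A: "\<And>i. i \<in> {..<L} \<Longrightarrow> A i \<in> sets (density lborel (normal_density (a i + \<delta> i) \<sigma>))"
    have Ab: "A i \<in> sets borel" if "i < L" for i using A[of i] that by auto
    have PiE_in: "Pi\<^sub>E {..<L} A \<in> sets (GQ L \<sigma> a)"
      unfolding sets_Q obs_space_def using Ab by (intro sets_PiM_I_finite) auto
    have sp2: "space (GQ L \<sigma> a) = Pi\<^sub>E {..<L} (\<lambda>_. UNIV)" unfolding GQ_def space_PiM by simp
    have "emeasure (density (GQ L \<sigma> a) (\<lambda>y. ennreal (grho L \<sigma> a \<delta> y))) (Pi\<^sub>E {..<L} A)
       = (\<integral>\<^sup>+ y. ennreal (grho L \<sigma> a \<delta> y) * indicator (Pi\<^sub>E {..<L} A) y \<partial>GQ L \<sigma> a)"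
      by (rule emeasure_density[OF rm PiE_in])
    also have "\<dots> = (\<integral>\<^sup>+ y. (\<Prod>j\<in>{..<L}. ennreal (grr \<sigma> (a j) (\<delta> j) (y j)) * indicator (A j) (y j)) \<partial>GQ L \<sigma> a)"
    proof (rule nn_integral_cong)
      fix y assume "y \<in> space (GQ L \<sigma> a)"
      then have ye: "y \<in> Pi\<^sub>E {..<L} (\<lambda>_. UNIV)" using sp2 by simp
      have i: "(\<Prod>j\<in>{..<L}. indicator (A j) (y j) :: ennreal) = indicator (Pi\<^sub>E {..<L} A) y"
      proof (cases "y \<in> Pi\<^sub>E {..<L} A")
        case True then show ?thesis by (simp add: PiE_iff)
      next
        case False
        then obtain j where "j < L" "y j \<notin> A j" using ye by (auto simp: PiE_iff)
        then show ?thesis using False by (auto simp: indicator_def)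
      qed
      have "(\<Prod>j\<in>{..<L}. ennreal (grr \<sigma> (a j) (\<delta> j) (y j)) * indicator (A j) (y j))
          = (\<Prod>j\<in>{..<L}. ennreal (grr \<sigma> (a j) (\<delta> j) (y j))) * (\<Prod>j\<in>{..<L}. indicator (A j) (y j))"
        by (rule prod.distrib)
      also have "(\<Prod>j\<in>{..<L}. ennreal (grr \<sigma> (a j) (\<delta> j) (y j))) = ennreal (grho L \<sigma> a \<delta> y)"
        unfolding grho_def by (rule prod_ennreal) (rule rr_nonneg)
      finally show "ennreal (grho L \<sigma> a \<delta> y) * indicator (Pi\<^sub>E {..<L} A) y
          = (\<Prod>j\<in>{..<L}. ennreal (grr \<sigma> (a j) (\<delta> j) (y j)) * indicator (A j) (y j))"
        using i by simp
    qed
    also have "\<dots> = (\<Prod>j\<in>{..<L}. \<integral>\<^sup>+ z. ennreal (grr \<sigma> (a j) (\<delta> j) z) * indicator (A j) z \<partial>density lborel (normal_density (a j) \<sigma>))"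
      unfolding GQ_def
    proof (rule P0.product_nn_integral_prod)
      fix j assume "j \<in> {..<L}"
      then have [measurable]: "A j \<in> sets borel" using Ab by auto
      show "(\<lambda>z. ennreal (grr \<sigma> (a j) (\<delta> j) z) * indicator (A j) z) \<in> borel_measurable (density lborel (normal_density (a j) \<sigma>))"
        unfolding grr_def by measurable
    qed simp
    also have "\<dots> = (\<Prod>j\<in>{..<L}. emeasure (density lborel (normal_density (a j + \<delta> j) \<sigma>)) (A j))"
    proof (rule prod.cong[OF refl])
      fix j assume "j \<in> {..<L}"
      then have [measurable]: "A j \<in> sets borel" using Ab by auto
      have "(\<integral>\<^sup>+ z. ennreal (grr \<sigma> (a j) (\<delta> j) z) * indicator (A j) z \<partial>density lborel (normal_density (a j) \<sigma>))
          = (\<integral>\<^sup>+ z. ennreal (normal_density (a j) \<sigma> z) * (ennreal (grr \<sigma> (a j) (\<delta> j) z) * indicator (A j) z) \<partial>lborel)"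
        by (rule nn_integral_density) (unfold grr_def, measurable)
      also have "\<dots> = (\<integral>\<^sup>+ z. ennreal (normal_density (a j + \<delta> j) \<sigma> z) * indicator (A j) z \<partial>lborel)"
        by (intro nn_integral_cong)
           (simp add: nd_rr[OF sp] ennreal_mult' rr_nonneg mult.assoc)
      also have "\<dots> = emeasure (density lborel (normal_density (a j + \<delta> j) \<sigma>)) (A j)"
        by (rule emeasure_density[symmetric]) measurable
      finally show "(\<integral>\<^sup>+ z. ennreal (grr \<sigma> (a j) (\<delta> j) z) * indicator (A j) z \<partial>density lborel (normal_density (a j) \<sigma>))
          = emeasure (density lborel (normal_density (a j + \<delta> j) \<sigma>)) (A j)" .
    qed
    finally show "emeasure (density (GQ L \<sigma> a) (\<lambda>y. ennreal (grho L \<sigma> a \<delta> y))) (Pi\<^sub>E {..<L} A)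
       = (\<Prod>j\<in>{..<L}. emeasure (density lborel (normal_density (a j + \<delta> j) \<sigma>)) (A j))" .
  qed
qed


lemma abs_mult_le_sq: "\<bar>x * y\<bar> \<le> x\<^sup>2 + (y::real)\<^sup>2"
proof -
  have h: "2 * (\<bar>x\<bar> * \<bar>y\<bar>) \<le> x\<^sup>2 + y\<^sup>2" using sum_squares_bound[of "\<bar>x\<bar>" "\<bar>y\<bar>"] by (simp add: mult.assoc)
  have "0 \<le> \<bar>x\<bar> * \<bar>y\<bar>" by simp
  then show ?thesis using h unfolding abs_mult by linarith
qed

lemma exp_rem: "\<bar>exp z - 1 - z\<bar> \<le> z\<^sup>2 * exp \<bar>z\<bar>" for z :: real
proof -
  obtain t where t: "\<bar>t\<bar> \<le> \<bar>z\<bar>" "exp z = (\<Sum>m<2. z ^ m / fact m) + exp t / fact 2 * z ^ 2"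
    using Maclaurin_exp_le[of z 2] by blast
  have "exp z - 1 - z = exp t / 2 * z\<^sup>2" using t(2) by (simp add: numeral_2_eq_2)
  then have "\<bar>exp z - 1 - z\<bar> = \<bar>exp t / 2 * z\<^sup>2\<bar>" by (simp only:)
  also have "\<dots> = exp t / 2 * z\<^sup>2" by simp
  also have "\<dots> \<le> exp \<bar>z\<bar> * z\<^sup>2"
  proof (rule mult_right_mono)
    have "t \<le> \<bar>z\<bar>" using t(1) abs_ge_self[of t] by linarith
    then have "exp t \<le> exp \<bar>z\<bar>" by simp
    then show "exp t / 2 \<le> exp \<bar>z\<bar>" using exp_gt_zero[of t] by linarith
  qed simp
  finally show ?thesis by (simp add: mult.commute)
qed

lemma sq_le_exp: assumes "0 \<le> (y::real)" shows "y\<^sup>2 \<le> 2 * exp y"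
proof -
  obtain t where t: "\<bar>t\<bar> \<le> \<bar>y\<bar>" "exp y = (\<Sum>m<3. y ^ m / fact m) + exp t / fact 3 * y ^ 3"
    using Maclaurin_exp_le[of y 3] by blast
  have "exp y = 1 + y + y\<^sup>2 / 2 + exp t / 6 * y ^ 3" using t(2) by (simp add: eval_nat_numeral)
  moreover have "0 \<le> exp t / 6 * y ^ 3" using assms by simp
  ultimately show ?thesis using assms by simp
qed

lemma exp_abs_le: "exp \<bar>x\<bar> \<le> exp x + exp (- x)" for x :: real
  using exp_gt_zero[of x] exp_gt_zero[of "-x"] by (cases "0 \<le> x") auto

lemma main_pt:
  fixes \<alpha> T C :: real
  assumes a: "\<bar>\<alpha>\<bar> \<le> 1" and C: "0 \<le> C"
  shows "\<bar>exp (\<alpha> * T - \<alpha>\<^sup>2 * C) - 1 - \<alpha> * T\<bar>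
      \<le> \<alpha>\<^sup>2 * (2 * exp (2 * C) * (exp (2 * T) + exp (- (2 * T))) + C)"
proof -
  define z where "z = \<alpha> * T - \<alpha>\<^sup>2 * C"
  have "\<alpha>\<^sup>2 = \<bar>\<alpha>\<bar> * \<bar>\<alpha>\<bar>" by (simp add: power2_eq_square)
  also have "\<dots> \<le> \<bar>\<alpha>\<bar> * 1" using a by (intro mult_left_mono) auto
  finally have a2: "\<alpha>\<^sup>2 \<le> \<bar>\<alpha>\<bar>" by simp
  have "\<bar>z\<bar> \<le> \<bar>\<alpha>\<bar> * \<bar>T\<bar> + \<alpha>\<^sup>2 * C" unfolding z_def
    using abs_triangle_ineq4[of "\<alpha> * T" "\<alpha>\<^sup>2 * C"] C by (simp add: abs_mult)
  also have "\<dots> \<le> \<bar>\<alpha>\<bar> * \<bar>T\<bar> + \<bar>\<alpha>\<bar> * C" using a2 C by (intro add_left_mono mult_right_mono) auto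
  finally have zb: "\<bar>z\<bar> \<le> \<bar>\<alpha>\<bar> * (\<bar>T\<bar> + C)" by (simp add: algebra_simps)
  have TC: "0 \<le> \<bar>T\<bar> + C" using C by simp
  have "\<bar>\<alpha>\<bar> * (\<bar>T\<bar> + C) \<le> 1 * (\<bar>T\<bar> + C)" using a TC by (rule mult_right_mono)
  then have zb2: "\<bar>z\<bar> \<le> \<bar>T\<bar> + C" using order_trans[OF zb] by simp
  have zsq: "z\<^sup>2 \<le> \<alpha>\<^sup>2 * (\<bar>T\<bar> + C)\<^sup>2"
  proof -
    have "z\<^sup>2 = \<bar>z\<bar>\<^sup>2" by simp
    also have "\<dots> \<le> (\<bar>\<alpha>\<bar> * (\<bar>T\<bar> + C))\<^sup>2" using zb by (intro power_mono) auto
    also have "\<dots> = \<alpha>\<^sup>2 * (\<bar>T\<bar> + C)\<^sup>2" by (simp add: power_mult_distrib)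
    finally show ?thesis .
  qed
  have "\<bar>exp z - 1 - \<alpha> * T\<bar> = \<bar>(exp z - 1 - z) - \<alpha>\<^sup>2 * C\<bar>" unfolding z_def by simp
  also have "\<dots> \<le> \<bar>exp z - 1 - z\<bar> + \<alpha>\<^sup>2 * C" using abs_triangle_ineq4[of "exp z - 1 - z" "\<alpha>\<^sup>2 * C"] C by simp
  also have "\<bar>exp z - 1 - z\<bar> \<le> z\<^sup>2 * exp \<bar>z\<bar>" by (rule exp_rem)
  also have "\<dots> \<le> (\<alpha>\<^sup>2 * (\<bar>T\<bar> + C)\<^sup>2) * exp (\<bar>T\<bar> + C)"
    using zsq zb2 by (intro mult_mono) auto
  also have "\<dots> \<le> (\<alpha>\<^sup>2 * (2 * exp (\<bar>T\<bar> + C))) * exp (\<bar>T\<bar> + C)"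
    using sq_le_exp[OF TC] by (intro mult_right_mono mult_left_mono) auto
  also have "\<dots> = \<alpha>\<^sup>2 * (2 * (exp (\<bar>T\<bar> + C) * exp (\<bar>T\<bar> + C)))"
    by (simp only: mult.assoc)
  also have "exp (\<bar>T\<bar> + C) * exp (\<bar>T\<bar> + C) = exp (2 * C) * exp (2 * \<bar>T\<bar>)"
    by (simp only: mult_exp_exp) (rule arg_cong[where f=exp], simp)
  also have "\<alpha>\<^sup>2 * (2 * (exp (2 * C) * exp (2 * \<bar>T\<bar>))) = \<alpha>\<^sup>2 * (2 * exp (2 * C) * exp (2 * \<bar>T\<bar>))"
    by (simp only: mult.assoc)
  also have "\<dots> \<le> \<alpha>\<^sup>2 * (2 * exp (2 * C) * (exp (2 * T) + exp (- (2 * T))))"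
    using exp_abs_le[of "2 * T"] by (intro mult_left_mono) (auto simp: abs_mult)
  finally show ?thesis unfolding z_def by (simp add: distrib_left)
qed

lemma exp_sq: "(exp x)\<^sup>2 = exp (2 * x)" for x :: real
proof -
  have "exp (2 * x) = exp (x + x)" by (simp only: mult_2)
  also have "\<dots> = exp x * exp x" by (rule exp_add)
  finally show ?thesis by (simp only: power2_eq_square)
qed

lemma pw_F: "\<bar>f\<bar> \<le> \<bar>1 + f\<^sup>2\<bar>" for f :: real
proof -
  have "\<bar>f * 1\<bar> \<le> f\<^sup>2 + 1\<^sup>2" by (rule abs_mult_le_sq)
  then show ?thesis by simp
qed

lemma pw_FE: fixes f \<alpha> T C :: real assumes C0: "0 \<le> C"
  shows "\<bar>exp (\<alpha> * T - \<alpha>\<^sup>2 * C) * f\<bar> \<le> \<bar>exp ((2 * \<alpha>) * T) + f\<^sup>2\<bar>"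
proof -
  have "\<bar>exp (\<alpha> * T - \<alpha>\<^sup>2 * C) * f\<bar> \<le> (exp (\<alpha> * T - \<alpha>\<^sup>2 * C))\<^sup>2 + f\<^sup>2"
    by (rule abs_mult_le_sq)
  also have "(exp (\<alpha> * T - \<alpha>\<^sup>2 * C))\<^sup>2 = exp (2 * (\<alpha> * T - \<alpha>\<^sup>2 * C))" by (rule exp_sq)
  also have "\<dots> \<le> exp ((2 * \<alpha>) * T)"
  proof -
    have "0 \<le> \<alpha>\<^sup>2 * C" using C0 by simp
    then have "2 * (\<alpha> * T - \<alpha>\<^sup>2 * C) \<le> (2 * \<alpha>) * T" by (simp add: algebra_simps)
    then show ?thesis by (simp only: exp_le_cancel_iff)
  qed
  also have "exp ((2 * \<alpha>) * T) + f\<^sup>2 = \<bar>exp ((2 * \<alpha>) * T) + f\<^sup>2\<bar>"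
    by (rule abs_of_nonneg[symmetric]) (intro add_nonneg_nonneg, simp_all)
  finally show ?thesis by simp
qed

lemma pw_FT: fixes f T :: real
  shows "\<bar>f * T\<bar> \<le> \<bar>f\<^sup>2 + 2 * exp (1 * T) + 2 * exp ((-1) * T)\<bar>"
proof -
  have "\<bar>f * T\<bar> \<le> f\<^sup>2 + T\<^sup>2" by (rule abs_mult_le_sq)
  also have "T\<^sup>2 = \<bar>T\<bar>\<^sup>2" by simp
  also have "\<bar>T\<bar>\<^sup>2 \<le> 2 * exp \<bar>T\<bar>" by (rule sq_le_exp) simp
  also have "\<dots> \<le> 2 * (exp T + exp (- T))" using exp_abs_le[of T] by simp
  also have "f\<^sup>2 + 2 * (exp T + exp (- T)) = \<bar>f\<^sup>2 + 2 * exp (1 * T) + 2 * exp ((-1) * T)\<bar>"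
  proof -
    have "0 \<le> f\<^sup>2 + 2 * exp (1 * T) + 2 * exp ((-1) * T)"
      by (intro add_nonneg_nonneg mult_nonneg_nonneg) simp_all
    then show ?thesis by (simp add: algebra_simps)
  qed
  finally show ?thesis by simp
qed

lemma pw_FH: fixes f T K C :: real assumes K0: "0 \<le> K" and C0: "0 \<le> C"
  shows "\<bar>\<bar>f\<bar> * (K * (exp (2 * T) + exp (- (2 * T))) + C)\<bar>
      \<le> \<bar>K * (2 * f\<^sup>2 + exp (4 * T) + exp ((-4) * T)) + C * (1 + f\<^sup>2)\<bar>"
proof -
  have e1: "\<bar>f\<bar> * exp (2 * T) \<le> f\<^sup>2 + exp (4 * T)"
  proof -
    have "\<bar>f * exp (2 * T)\<bar> \<le> f\<^sup>2 + (exp (2 * T))\<^sup>2" by (rule abs_mult_le_sq)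
    moreover have "(exp (2 * T))\<^sup>2 = exp (4 * T)" by (simp add: exp_sq)
    ultimately show ?thesis by (simp add: abs_mult)
  qed
  have e2: "\<bar>f\<bar> * exp (- (2 * T)) \<le> f\<^sup>2 + exp ((-4) * T)"
  proof -
    have "\<bar>f * exp (- (2 * T))\<bar> \<le> f\<^sup>2 + (exp (- (2 * T)))\<^sup>2" by (rule abs_mult_le_sq)
    moreover have "(exp (- (2 * T)))\<^sup>2 = exp ((-4) * T)" by (simp add: exp_sq)
    ultimately show ?thesis by (simp add: abs_mult)
  qed
  have fl: "\<bar>f\<bar> \<le> 1 + f\<^sup>2" using pw_F[of f] by simp
  have H0: "0 \<le> K * (exp (2 * T) + exp (- (2 * T))) + C"
    using K0 C0 by (intro add_nonneg_nonneg mult_nonneg_nonneg) simp_all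
  have "\<bar>\<bar>f\<bar> * (K * (exp (2 * T) + exp (- (2 * T))) + C)\<bar>
      = \<bar>f\<bar> * (K * (exp (2 * T) + exp (- (2 * T))) + C)"
    using H0 by (simp add: abs_mult)
  also have "\<dots> = K * (\<bar>f\<bar> * exp (2 * T)) + K * (\<bar>f\<bar> * exp (- (2 * T))) + C * \<bar>f\<bar>"
    by (simp add: algebra_simps)
  also have "\<dots> \<le> K * (f\<^sup>2 + exp (4 * T)) + K * (f\<^sup>2 + exp ((-4) * T)) + C * (1 + f\<^sup>2)"
    by (intro add_mono mult_left_mono e1 e2 fl K0 C0)
  also have "\<dots> = K * (2 * f\<^sup>2 + exp (4 * T) + exp ((-4) * T)) + C * (1 + f\<^sup>2)"
    by (simp add: distrib_left)
  also have "\<dots> \<le> \<bar>K * (2 * f\<^sup>2 + exp (4 * T) + exp ((-4) * T)) + C * (1 + f\<^sup>2)\<bar>" by (rule abs_ge_self)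
  finally show ?thesis .
qed

lemma pw_main: fixes f \<alpha> T C :: real assumes a1: "\<bar>\<alpha>\<bar> \<le> 1" and C0: "0 \<le> C"
  shows "\<bar>(exp (\<alpha> * T - \<alpha>\<^sup>2 * C) - 1 - \<alpha> * T) * f\<bar>
      \<le> \<alpha>\<^sup>2 * (\<bar>f\<bar> * (2 * exp (2 * C) * (exp (2 * T) + exp (- (2 * T))) + C))"
proof -
  have "\<bar>(exp (\<alpha> * T - \<alpha>\<^sup>2 * C) - 1 - \<alpha> * T) * f\<bar> = \<bar>exp (\<alpha> * T - \<alpha>\<^sup>2 * C) - 1 - \<alpha> * T\<bar> * \<bar>f\<bar>"
    by (rule abs_mult)
  also have "\<dots> \<le> (\<alpha>\<^sup>2 * (2 * exp (2 * C) * (exp (2 * T) + exp (- (2 * T))) + C)) * \<bar>f\<bar>"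
    by (rule mult_right_mono[OF main_pt[OF a1 C0]]) simp
  also have "\<dots> = \<alpha>\<^sup>2 * (\<bar>f\<bar> * (2 * exp (2 * C) * (exp (2 * T) + exp (- (2 * T))) + C))"
    by (simp only: mult.commute mult.left_commute mult.assoc)
  finally show ?thesis .
qed


definition gtt :: "nat \<Rightarrow> real \<Rightarrow> (nat \<Rightarrow> real) \<Rightarrow> (nat \<Rightarrow> real) \<Rightarrow> (nat \<Rightarrow> real) \<Rightarrow> real" where
  "gtt L \<sigma> a u y = (\<Sum>j<L. u j * (y j - a j)) / \<sigma>\<^sup>2"

definition gcc :: "nat \<Rightarrow> real \<Rightarrow> (nat \<Rightarrow> real) \<Rightarrow> real" where
  "gcc L \<sigma> u = (\<Sum>j<L. (u j)\<^sup>2) / (2 * \<sigma>\<^sup>2)"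

lemma cc_nonneg: "0 \<le> gcc L \<sigma> u" unfolding gcc_def by (intro divide_nonneg_nonneg sum_nonneg) auto

lemma tt_meas[measurable]: "gtt L \<sigma> a u \<in> borel_measurable (obs_space L)"
  unfolding gtt_def obs_space_def by measurable

lemma rho_scale: "grho L \<sigma> a (\<lambda>j. \<alpha> * u j) y = exp (\<alpha> * gtt L \<sigma> a u y - \<alpha>\<^sup>2 * gcc L \<sigma> u)"
proof -
  have "(\<Sum>j<L. \<alpha> * u j * (y j - a j) / \<sigma>\<^sup>2 - (\<alpha> * u j)\<^sup>2 / (2 * \<sigma>\<^sup>2))
      = \<alpha> * gtt L \<sigma> a u y - \<alpha>\<^sup>2 * gcc L \<sigma> u"
    unfolding gtt_def gcc_def sum_subtractf
    by (simp add: sum_divide_distrib sum_distrib_left power_mult_distrib mult.assoc)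
  then show ?thesis unfolding grho_def grr_def by (simp add: exp_sum[symmetric])
qed

lemma rho_int: assumes sp: "\<sigma> > 0" shows "integrable (GQ L \<sigma> a) (grho L \<sigma> a \<delta>)"
proof -
  interpret prob_space "GQ L \<sigma> (\<lambda>j. a j + \<delta> j)" by (rule Q_prob[OF sp])
  have "integrable (GQ L \<sigma> (\<lambda>j. a j + \<delta> j)) (\<lambda>_. 1::real)" by simp
  then have "integrable (density (GQ L \<sigma> a) (\<lambda>y. ennreal (grho L \<sigma> a \<delta> y))) (\<lambda>_. 1::real)"
    by (simp add: Q_shift[OF sp])
  then have "integrable (GQ L \<sigma> a) (\<lambda>y. grho L \<sigma> a \<delta> y *\<^sub>R (1::real))"
    by (subst (asm) integrable_density) (auto simp: meas_Q rho_nonneg)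
  then show ?thesis by simp
qed

lemma exp_tt_int: assumes sp: "\<sigma> > 0" shows "integrable (GQ L \<sigma> a) (\<lambda>y. exp (\<beta> * gtt L \<sigma> a u y))"
proof -
  have "integrable (GQ L \<sigma> a) (\<lambda>y. exp (\<beta>\<^sup>2 * gcc L \<sigma> u) * grho L \<sigma> a (\<lambda>j. \<beta> * u j) y)"
    using rho_int[OF sp] by (rule integrable_mult_right)
  moreover have "exp (\<beta>\<^sup>2 * gcc L \<sigma> u) * grho L \<sigma> a (\<lambda>j. \<beta> * u j) y = exp (\<beta> * gtt L \<sigma> a u y)" for y
    unfolding rho_scale by (simp add: mult_exp_exp)
  ultimately show ?thesis by simp
qed

lemma int_shift: assumes sp: "\<sigma> > 0" and [measurable]: "f \<in> borel_measurable (obs_space L)"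
  shows "(\<integral>y. f y \<partial>GQ L \<sigma> (\<lambda>j. a j + \<delta> j)) = (\<integral>y. grho L \<sigma> a \<delta> y * f y \<partial>GQ L \<sigma> a)"
  unfolding Q_shift[OF sp]
  by (subst integral_density) (auto simp: meas_Q rho_nonneg)

lemma deriv_from_bound:
  fixes G :: "real \<Rightarrow> real"
  assumes b: "\<And>\<alpha>. \<bar>\<alpha>\<bar> \<le> 1 \<Longrightarrow> \<bar>G \<alpha> - G 0 - \<alpha> * D\<bar> \<le> K * \<alpha>\<^sup>2"
  shows "(G has_real_derivative D) (at 0)"
proof -
  have "((\<lambda>h. (G h - G 0) / h - D) \<longlongrightarrow> 0) (at 0)"
  proof (rule Lim_null_comparison)
    show "\<forall>\<^sub>F h in at 0. norm ((G h - G 0) / h - D) \<le> \<bar>K\<bar> * \<bar>h\<bar>"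
      unfolding eventually_at
    proof (intro exI[of _ 1] conjI ballI impI)
      fix h :: real assume "h \<in> UNIV" and h: "h \<noteq> 0 \<and> dist h 0 < 1"
      then have h0: "h \<noteq> 0" and h1: "\<bar>h\<bar> \<le> 1" by auto
      have "(G h - G 0) / h - D = (G h - G 0 - h * D) / h" using h0 by (simp add: field_simps)
      then have "norm ((G h - G 0) / h - D) = \<bar>G h - G 0 - h * D\<bar> / \<bar>h\<bar>" by simp
      also have "\<dots> \<le> K * h\<^sup>2 / \<bar>h\<bar>" by (rule divide_right_mono[OF b[OF h1]]) simp
      also have "h\<^sup>2 = \<bar>h\<bar> * \<bar>h\<bar>" by (simp add: power2_eq_square)
      also have "K * (\<bar>h\<bar> * \<bar>h\<bar>) / \<bar>h\<bar> = K * \<bar>h\<bar>"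
      proof -
        have "\<bar>h\<bar> \<noteq> 0" using h0 by simp
        then show ?thesis by (simp only: mult.assoc[symmetric]) (rule nonzero_mult_div_cancel_right)
      qed
      also have "\<dots> \<le> \<bar>K\<bar> * \<bar>h\<bar>" by (intro mult_right_mono) auto
      finally show "norm ((G h - G 0) / h - D) \<le> \<bar>K\<bar> * \<bar>h\<bar>" .
    qed simp
    have "((\<lambda>h. \<bar>K\<bar> * \<bar>h\<bar>) \<longlongrightarrow> \<bar>K\<bar> * \<bar>0\<bar>) (at (0::real))" by (intro tendsto_intros)
    then show "((\<lambda>h. \<bar>K\<bar> * \<bar>h\<bar>) \<longlongrightarrow> 0) (at 0)" by simp
  qed
  then have "((\<lambda>h. (G h - G 0) / h) \<longlongrightarrow> D) (at 0)" by (rule LIM_zero_cancel)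
  then show ?thesis by (simp add: has_field_derivative_iff)
qed

lemma deriv_main:
  assumes sp: "\<sigma> > 0" and fm[measurable]: "f \<in> borel_measurable (obs_space L)"
    and f2: "integrable (GQ L \<sigma> a) (\<lambda>y. (f y)\<^sup>2)"
  shows "((\<lambda>\<alpha>. \<integral>y. f y \<partial>GQ L \<sigma> (\<lambda>j. a j + \<alpha> * u j)) has_real_derivative
            (\<integral>y. f y * gtt L \<sigma> a u y \<partial>GQ L \<sigma> a)) (at 0)"
proof -
  interpret P: prob_space "GQ L \<sigma> a" by (rule Q_prob[OF sp])
  define T where "T = gtt L \<sigma> a u"
  define C where "C = gcc L \<sigma> u"
  define K where "K = 2 * exp (2 * C)"
  define H where "H = (\<lambda>y. K * (exp (2 * T y) + exp (- (2 * T y))) + C)"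
  have C0: "0 \<le> C" unfolding C_def by (rule cc_nonneg)
  have K0: "0 \<le> K" unfolding K_def by simp
  have H0: "0 \<le> H y" for y unfolding H_def using K0 C0 by (intro add_nonneg_nonneg mult_nonneg_nonneg) auto
  have Tm[measurable]: "T \<in> borel_measurable (GQ L \<sigma> a)" unfolding T_def meas_Q by simp
  have fmQ[measurable]: "f \<in> borel_measurable (GQ L \<sigma> a)" unfolding meas_Q by simp
  have Hm[measurable]: "H \<in> borel_measurable (GQ L \<sigma> a)" unfolding H_def by measurable
  have iE: "integrable (GQ L \<sigma> a) (\<lambda>y. exp (\<beta> * T y))" for \<beta> unfolding T_def by (rule exp_tt_int[OF sp])
  have i1: "integrable (GQ L \<sigma> a) (\<lambda>y. 1::real)" by simp
  have iF: "integrable (GQ L \<sigma> a) f"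
  proof (rule Bochner_Integration.integrable_bound[where f="\<lambda>y. 1 + (f y)\<^sup>2"])
    show "integrable (GQ L \<sigma> a) (\<lambda>y. 1 + (f y)\<^sup>2)" by (intro Bochner_Integration.integrable_add i1 f2)
    show "AE y in GQ L \<sigma> a. norm (f y) \<le> norm (1 + (f y)\<^sup>2)"
      by (intro AE_I2) (simp only: real_norm_def pw_F)
  qed measurable
  have iFE: "integrable (GQ L \<sigma> a) (\<lambda>y. exp (\<alpha> * T y - \<alpha>\<^sup>2 * C) * f y)" for \<alpha>
  proof (rule Bochner_Integration.integrable_bound[where f="\<lambda>y. exp ((2 * \<alpha>) * T y) + (f y)\<^sup>2"])
    show "integrable (GQ L \<sigma> a) (\<lambda>y. exp ((2 * \<alpha>) * T y) + (f y)\<^sup>2)"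
      by (intro Bochner_Integration.integrable_add iE f2)
    show "AE y in GQ L \<sigma> a. norm (exp (\<alpha> * T y - \<alpha>\<^sup>2 * C) * f y) \<le> norm (exp ((2 * \<alpha>) * T y) + (f y)\<^sup>2)"
      by (intro AE_I2) (simp only: real_norm_def pw_FE[OF C0])
  qed measurable
  have iFT: "integrable (GQ L \<sigma> a) (\<lambda>y. f y * T y)"
  proof (rule Bochner_Integration.integrable_bound[where f="\<lambda>y. (f y)\<^sup>2 + 2 * exp (1 * T y) + 2 * exp ((-1) * T y)"])
    show "integrable (GQ L \<sigma> a) (\<lambda>y. (f y)\<^sup>2 + 2 * exp (1 * T y) + 2 * exp ((-1) * T y))"
      by (intro Bochner_Integration.integrable_add integrable_mult_right iE f2)
    show "AE y in GQ L \<sigma> a. norm (f y * T y) \<le> norm ((f y)\<^sup>2 + 2 * exp (1 * T y) + 2 * exp ((-1) * T y))"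
      by (intro AE_I2) (simp only: real_norm_def pw_FT)
  qed measurable
  have iFH: "integrable (GQ L \<sigma> a) (\<lambda>y. \<bar>f y\<bar> * H y)"
  proof (rule Bochner_Integration.integrable_bound[where f="\<lambda>y. K * (2 * (f y)\<^sup>2 + exp (4 * T y) + exp ((-4) * T y)) + C * (1 + (f y)\<^sup>2)"])
    show "integrable (GQ L \<sigma> a) (\<lambda>y. K * (2 * (f y)\<^sup>2 + exp (4 * T y) + exp ((-4) * T y)) + C * (1 + (f y)\<^sup>2))"
      by (intro Bochner_Integration.integrable_add integrable_mult_right iE f2 i1)
    show "AE y in GQ L \<sigma> a. norm (\<bar>f y\<bar> * H y) \<le> norm (K * (2 * (f y)\<^sup>2 + exp (4 * T y) + exp ((-4) * T y)) + C * (1 + (f y)\<^sup>2))"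
      by (intro AE_I2) (simp only: real_norm_def H_def pw_FH[OF K0 C0])
  qed measurable
  define G where "G = (\<lambda>\<alpha>. \<integral>y. f y \<partial>GQ L \<sigma> (\<lambda>j. a j + \<alpha> * u j))"
  define D where "D = (\<integral>y. f y * T y \<partial>GQ L \<sigma> a)"
  define I where "I = (\<integral>y. \<bar>f y\<bar> * H y \<partial>GQ L \<sigma> a)"
  have G: "G \<alpha> = (\<integral>y. exp (\<alpha> * T y - \<alpha>\<^sup>2 * C) * f y \<partial>GQ L \<sigma> a)" for \<alpha>
    using int_shift[OF sp fm, of a "\<lambda>j. \<alpha> * u j"] unfolding G_def rho_scale T_def C_def .
  have G0: "G 0 = (\<integral>y. f y \<partial>GQ L \<sigma> a)" unfolding G by simp
  have "(G has_real_derivative D) (at 0)"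
  proof (rule deriv_from_bound)
    fix \<alpha> :: real assume a1: "\<bar>\<alpha>\<bar> \<le> 1"
    have "(\<integral>y. (exp (\<alpha> * T y - \<alpha>\<^sup>2 * C) - 1 - \<alpha> * T y) * f y \<partial>GQ L \<sigma> a)
        = (\<integral>y. (exp (\<alpha> * T y - \<alpha>\<^sup>2 * C) * f y - f y) - \<alpha> * (f y * T y) \<partial>GQ L \<sigma> a)"
      by (intro Bochner_Integration.integral_cong) (simp_all add: algebra_simps)
    also have "\<dots> = (\<integral>y. exp (\<alpha> * T y - \<alpha>\<^sup>2 * C) * f y - f y \<partial>GQ L \<sigma> a) - (\<integral>y. \<alpha> * (f y * T y) \<partial>GQ L \<sigma> a)"
      by (rule Bochner_Integration.integral_diff) (intro Bochner_Integration.integrable_diff iFE iF, intro integrable_mult_right iFT)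
    also have "\<dots> = G \<alpha> - G 0 - \<alpha> * D"
      unfolding G G0 D_def using iFE iF by simp
    finally have eq: "G \<alpha> - G 0 - \<alpha> * D = (\<integral>y. (exp (\<alpha> * T y - \<alpha>\<^sup>2 * C) - 1 - \<alpha> * T y) * f y \<partial>GQ L \<sigma> a)" ..
    have "\<bar>G \<alpha> - G 0 - \<alpha> * D\<bar> = norm (\<integral>y. (exp (\<alpha> * T y - \<alpha>\<^sup>2 * C) - 1 - \<alpha> * T y) * f y \<partial>GQ L \<sigma> a)"
      unfolding eq real_norm_def ..
    also have "\<dots> \<le> (\<integral>y. norm ((exp (\<alpha> * T y - \<alpha>\<^sup>2 * C) - 1 - \<alpha> * T y) * f y) \<partial>GQ L \<sigma> a)"
      by (rule integral_norm_bound)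
    also have "\<dots> \<le> (\<integral>y. \<alpha>\<^sup>2 * (\<bar>f y\<bar> * H y) \<partial>GQ L \<sigma> a)"
    proof (rule integral_mono)
      have "integrable (GQ L \<sigma> a) (\<lambda>y. (exp (\<alpha> * T y - \<alpha>\<^sup>2 * C) * f y - f y) - \<alpha> * (f y * T y))"
        by (intro Bochner_Integration.integrable_diff iFE iF integrable_mult_right iFT)
      moreover have "(\<lambda>y. (exp (\<alpha> * T y - \<alpha>\<^sup>2 * C) * f y - f y) - \<alpha> * (f y * T y))
          = (\<lambda>y. (exp (\<alpha> * T y - \<alpha>\<^sup>2 * C) - 1 - \<alpha> * T y) * f y)" by (simp add: fun_eq_iff algebra_simps)
      ultimately have "integrable (GQ L \<sigma> a) (\<lambda>y. (exp (\<alpha> * T y - \<alpha>\<^sup>2 * C) - 1 - \<alpha> * T y) * f y)" by simp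
      then show "integrable (GQ L \<sigma> a) (\<lambda>y. norm ((exp (\<alpha> * T y - \<alpha>\<^sup>2 * C) - 1 - \<alpha> * T y) * f y))"
        by (rule Bochner_Integration.integrable_norm)
      show "integrable (GQ L \<sigma> a) (\<lambda>y. \<alpha>\<^sup>2 * (\<bar>f y\<bar> * H y))" by (intro integrable_mult_right iFH)
      fix y
      show "norm ((exp (\<alpha> * T y - \<alpha>\<^sup>2 * C) - 1 - \<alpha> * T y) * f y) \<le> \<alpha>\<^sup>2 * (\<bar>f y\<bar> * H y)"
        unfolding real_norm_def H_def K_def by (rule pw_main[OF a1 C0])
    qed
    also have "\<dots> = I * \<alpha>\<^sup>2" unfolding I_def by (simp add: mult.commute)
    finally show "\<bar>G \<alpha> - G 0 - \<alpha> * D\<bar> \<le> I * \<alpha>\<^sup>2" .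
  qed
  then show ?thesis unfolding G_def D_def T_def .
qed


definition gee :: "nat \<Rightarrow> nat \<Rightarrow> real" where "gee k = (\<lambda>i. if i = k then 1 else 0)"

lemma tt_ee: assumes k: "k < L" shows "gtt L \<sigma> a (gee k) y = (y k - a k) / \<sigma>\<^sup>2"
proof -
  have "(\<Sum>j<L. gee k j * (y j - a j)) = (\<Sum>j<L. if j = k then y j - a j else 0)"
    by (intro sum.cong) (simp_all add: gee_def)
  also have "\<dots> = y k - a k" using k by simp
  finally show ?thesis unfolding gtt_def by simp
qed

lemma z_meas: "(\<lambda>y. y k - a k) \<in> borel_measurable (obs_space L)" if "k < L"
proof -
  have "(\<lambda>y. y k) \<in> borel_measurable (obs_space L)"
    unfolding obs_space_def by (rule measurable_component_singleton) (use that in simp)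
  then show ?thesis by (rule borel_measurable_diff) simp
qed

lemma zsq_meas: "(\<lambda>y. (y k - a k)\<^sup>2) \<in> borel_measurable (obs_space L)" if "k < L"
  using z_meas[OF that] by (rule borel_measurable_power)

lemma z_sq_int: assumes sp: "\<sigma> > 0" and k: "k < L"
  shows "integrable (GQ L \<sigma> a) (\<lambda>y. (y k - a k)\<^sup>2)"
proof -
  have eq: "\<sigma>\<^sup>2 * gtt L \<sigma> a (gee k) y = y k - a k" for y using sp by (simp add: tt_ee[OF k])
  show ?thesis
  proof (rule Bochner_Integration.integrable_bound[where f="\<lambda>y. 2 * exp (\<sigma>\<^sup>2 * gtt L \<sigma> a (gee k) y) + 2 * exp ((- \<sigma>\<^sup>2) * gtt L \<sigma> a (gee k) y)"])
    show "integrable (GQ L \<sigma> a) (\<lambda>y. 2 * exp (\<sigma>\<^sup>2 * gtt L \<sigma> a (gee k) y) + 2 * exp ((- \<sigma>\<^sup>2) * gtt L \<sigma> a (gee k) y))"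
      by (intro Bochner_Integration.integrable_add integrable_mult_right exp_tt_int[OF sp])
    show "AE y in GQ L \<sigma> a. norm ((y k - a k)\<^sup>2) \<le> norm (2 * exp (\<sigma>\<^sup>2 * gtt L \<sigma> a (gee k) y) + 2 * exp ((- \<sigma>\<^sup>2) * gtt L \<sigma> a (gee k) y))"
    proof (rule AE_I2)
      fix y
      have "(y k - a k)\<^sup>2 = \<bar>y k - a k\<bar>\<^sup>2" by simp
      also have "\<dots> \<le> 2 * exp \<bar>y k - a k\<bar>" by (rule sq_le_exp) simp
      also have "\<dots> \<le> 2 * (exp (y k - a k) + exp (- (y k - a k)))" using exp_abs_le[of "y k - a k"] by simp
      also have "\<dots> = 2 * exp (\<sigma>\<^sup>2 * gtt L \<sigma> a (gee k) y) + 2 * exp ((- \<sigma>\<^sup>2) * gtt L \<sigma> a (gee k) y)"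
        using eq[of y] by simp
      finally show "norm ((y k - a k)\<^sup>2) \<le> norm (2 * exp (\<sigma>\<^sup>2 * gtt L \<sigma> a (gee k) y) + 2 * exp ((- \<sigma>\<^sup>2) * gtt L \<sigma> a (gee k) y))"
        by simp
    qed
  qed (unfold meas_Q, rule zsq_meas[OF k])
qed

lemma sq_int_imp_int: assumes "prob_space M" "integrable M (\<lambda>y. (f y)\<^sup>2)" "f \<in> borel_measurable M"
  shows "integrable M (f :: _ \<Rightarrow> real)"
proof -
  interpret prob_space M by fact
  show ?thesis
  proof (rule Bochner_Integration.integrable_bound[where f="\<lambda>y. 1 + (f y)\<^sup>2"])
    show "integrable M (\<lambda>y. 1 + (f y)\<^sup>2)" by (intro Bochner_Integration.integrable_add integrable_const assms)
    show "AE y in M. norm (f y) \<le> norm (1 + (f y)\<^sup>2)"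
      by (intro AE_I2) (simp only: real_norm_def pw_F)
  qed fact
qed

lemma prod_int: assumes "integrable M (\<lambda>y. (f y)\<^sup>2)" "integrable M (\<lambda>y. (g y)\<^sup>2)"
    "f \<in> borel_measurable M" "g \<in> borel_measurable M"
  shows "integrable M (\<lambda>y. f y * g y :: real)"
proof (rule Bochner_Integration.integrable_bound[where f="\<lambda>y. (f y)\<^sup>2 + (g y)\<^sup>2"])
  show "integrable M (\<lambda>y. (f y)\<^sup>2 + (g y)\<^sup>2)" by (intro Bochner_Integration.integrable_add assms)
  show "AE y in M. norm (f y * g y) \<le> norm ((f y)\<^sup>2 + (g y)\<^sup>2)"
  proof (rule AE_I2)
    fix y
    have "\<bar>f y * g y\<bar> \<le> (f y)\<^sup>2 + (g y)\<^sup>2" by (rule abs_mult_le_sq)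
    also have "\<dots> \<le> \<bar>(f y)\<^sup>2 + (g y)\<^sup>2\<bar>" by (rule abs_ge_self)
    finally show "norm (f y * g y) \<le> norm ((f y)\<^sup>2 + (g y)\<^sup>2)" by (simp only: real_norm_def)
  qed
qed (use assms in measurable)

lemma z_int: assumes sp: "\<sigma> > 0" and k: "k < L"
  shows "integrable (GQ L \<sigma> a) (\<lambda>y. y k - a k)"
  by (rule sq_int_imp_int[OF Q_prob[OF sp] z_sq_int[OF sp k]]) (unfold meas_Q, rule z_meas[OF k])

lemma z_mean: assumes sp: "\<sigma> > 0" and k: "k < L"
  shows "(\<integral>y. y k - a k \<partial>GQ L \<sigma> a) = 0"
proof -
  have d: "((\<lambda>\<alpha>. \<integral>y. 1 \<partial>GQ L \<sigma> (\<lambda>j. a j + \<alpha> * gee k j)) has_real_derivative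
            (\<integral>y. 1 * gtt L \<sigma> a (gee k) y \<partial>GQ L \<sigma> a)) (at 0)"
  proof (rule deriv_main[OF sp])
    interpret P: prob_space "GQ L \<sigma> a" by (rule Q_prob[OF sp])
    show "integrable (GQ L \<sigma> a) (\<lambda>y. 1\<^sup>2)" by simp
  qed simp
  have c: "(\<lambda>\<alpha>. \<integral>y. 1 \<partial>GQ L \<sigma> (\<lambda>j. a j + \<alpha> * gee k j)) = (\<lambda>_. (1::real))"
  proof (rule ext)
    fix \<alpha>
    show "(\<integral>y. (1::real) \<partial>GQ L \<sigma> (\<lambda>j. a j + \<alpha> * gee k j)) = 1"
      by (simp add: prob_space.prob_space[OF Q_prob[OF sp]])
  qed
  have "(\<integral>y. 1 * gtt L \<sigma> a (gee k) y \<partial>GQ L \<sigma> a) = 0"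
    using d unfolding c using DERIV_const DERIV_unique by blast
  then have "(\<integral>y. (y k - a k) / \<sigma>\<^sup>2 \<partial>GQ L \<sigma> a) = 0" by (simp add: tt_ee[OF k])
  then show ?thesis using sp by simp
qed

lemma Q_cong: "(\<And>j. j < L \<Longrightarrow> a j = b j) \<Longrightarrow> GQ L \<sigma> a = GQ L \<sigma> b"
  unfolding GQ_def by (intro PiM_cong) auto

lemma z_mean_shift: assumes sp: "\<sigma> > 0" and k: "k < L"
  shows "(\<integral>y. y k - a k \<partial>GQ L \<sigma> b) = b k - a k"
proof -
  have "(\<integral>y. y k - a k \<partial>GQ L \<sigma> b) = (\<integral>y. (y k - b k) + (b k - a k) \<partial>GQ L \<sigma> b)" by simp
  also have "\<dots> = (\<integral>y. y k - b k \<partial>GQ L \<sigma> b) + (\<integral>y. b k - a k \<partial>GQ L \<sigma> b)"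
  proof (rule Bochner_Integration.integral_add[OF z_int[OF sp k]])
    interpret P: prob_space "GQ L \<sigma> b" by (rule Q_prob[OF sp])
    show "integrable (GQ L \<sigma> b) (\<lambda>y. b k - a k)" by simp
  qed
  also have "\<dots> = b k - a k"
    by (simp add: z_mean[OF sp k] prob_space.prob_space[OF Q_prob[OF sp]])
  finally show ?thesis .
qed

lemma z_cov: assumes sp: "\<sigma> > 0" and k: "k < L" and j: "j < L"
  shows "(\<integral>y. (y k - a k) * (y j - a j) \<partial>GQ L \<sigma> a) = \<sigma>\<^sup>2 * gee j k"
proof -
  have d: "((\<lambda>\<alpha>. \<integral>y. y k - a k \<partial>GQ L \<sigma> (\<lambda>i. a i + \<alpha> * gee j i)) has_real_derivative
            (\<integral>y. (y k - a k) * gtt L \<sigma> a (gee j) y \<partial>GQ L \<sigma> a)) (at 0)"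
    by (rule deriv_main[OF sp z_meas[OF k] z_sq_int[OF sp k]])
  have c: "(\<lambda>\<alpha>. \<integral>y. y k - a k \<partial>GQ L \<sigma> (\<lambda>i. a i + \<alpha> * gee j i)) = (\<lambda>\<alpha>. \<alpha> * gee j k)"
    by (rule ext) (simp add: z_mean_shift[OF sp k])
  have d2: "((\<lambda>\<alpha>. \<alpha> * gee j k) has_real_derivative gee j k) (at 0)"
    using DERIV_cmult_right[OF DERIV_ident, of "gee j k"] by simp
  have "(\<integral>y. (y k - a k) * gtt L \<sigma> a (gee j) y \<partial>GQ L \<sigma> a) = gee j k"
    using d unfolding c using d2 DERIV_unique by blast
  then have "(\<integral>y. (y k - a k) * (y j - a j) / \<sigma>\<^sup>2 \<partial>GQ L \<sigma> a) = gee j k" by (simp add: tt_ee[OF j])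
  then show ?thesis using sp by (simp add: field_simps)
qed


lemma gram_entry: assumes Ds: "Ds \<in> carrier_mat L p" and a: "a < p" and b: "b < p"
  shows "(transpose_mat Ds * Ds) $$ (a, b) = (\<Sum>j<L. Ds $$ (j, a) * Ds $$ (j, b))"
  using Ds a b by (simp add: scalar_prod_def atLeast0LessThan)

lemma gram_inv:
  assumes Ds: "Ds \<in> carrier_mat L p" and fr: "full_col_rank Ds"
  shows "mat_inv (transpose_mat Ds * Ds) \<in> carrier_mat p p"
    "(transpose_mat Ds * Ds) * mat_inv (transpose_mat Ds * Ds) = 1\<^sub>m p"
proof -
  define G where "G = transpose_mat Ds * Ds"
  have Gc: "G \<in> carrier_mat p p" unfolding G_def using Ds by auto
  have dG: "Determinant.det G \<noteq> 0"
  proof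
    assume "Determinant.det G = 0"
    then obtain c where c: "c \<in> carrier_vec p" "c \<noteq> 0\<^sub>v p" "G *\<^sub>v c = 0\<^sub>v p"
      using det_0_iff_vec_prod_zero[OF Gc] by blast
    define w where "w j = (\<Sum>a<p. Ds $$ (j, a) * c $ a)" for j
    have Gc0: "(\<Sum>b<p. G $$ (a, b) * c $ b) = 0" if "a < p" for a
    proof -
      have "(G *\<^sub>v c) $ a = 0" using c(3) that by simp
      then show ?thesis using that Gc c(1) by (simp add: scalar_prod_def atLeast0LessThan)
    qed
    have "(\<Sum>j<L. (w j)\<^sup>2) = (\<Sum>j<L. \<Sum>a<p. \<Sum>b<p. c $ a * (Ds $$ (j, a) * Ds $$ (j, b)) * c $ b)"
      unfolding w_def power2_eq_square sum_product by (intro sum.cong refl) (simp add: algebra_simps)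
    also have "\<dots> = (\<Sum>a<p. \<Sum>b<p. \<Sum>j<L. c $ a * (Ds $$ (j, a) * Ds $$ (j, b)) * c $ b)"
      by (simp add: sum.swap[of _ "{..<L}"])
    also have "\<dots> = (\<Sum>a<p. c $ a * (\<Sum>b<p. G $$ (a, b) * c $ b))"
      unfolding sum_distrib_left
      by (intro sum.cong refl) (simp add: G_def gram_entry[OF Ds] sum_distrib_left sum_distrib_right algebra_simps)
    also have "\<dots> = 0" by (simp add: Gc0)
    finally have "(\<Sum>j<L. (w j)\<^sup>2) = 0" .
    then have w0: "w j = 0" if "j < L" for j
      using that by (subst (asm) sum_nonneg_eq_0_iff) auto
    have "Ds *\<^sub>v c = 0\<^sub>v L"
    proof (rule eq_vecI)
      fix j assume "j < dim_vec (0\<^sub>v L :: real vec)"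
      then have j: "j < L" by simp
      have "(Ds *\<^sub>v c) $ j = w j" using Ds c(1) j by (simp add: w_def scalar_prod_def atLeast0LessThan)
      then show "(Ds *\<^sub>v c) $ j = 0\<^sub>v L $ j" using w0 j by simp
    qed (use Ds in simp)
    then have "c = 0\<^sub>v p" using fr Ds c(1) unfolding full_col_rank_def by auto
    then show False using c(2) by simp
  qed
  from det_non_zero_imp_unit[OF Gc dG, unfolded Units_def, of "()"]
  obtain B where B: "B \<in> carrier_mat p p" "B * G = 1\<^sub>m p" "G * B = 1\<^sub>m p"
    by (auto simp: ring_mat_def)
  have "\<exists>B. inverts_mat G B \<and> inverts_mat B G"
    using B Gc by (intro exI[of _ B]) (auto simp: inverts_mat_def)
  then have Gi: "inverts_mat G (mat_inv G) \<and> inverts_mat (mat_inv G) G"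
    unfolding mat_inv_def by (rule someI_ex)
  then have GGi: "G * mat_inv G = 1\<^sub>m p" and GiG: "mat_inv G * G = 1\<^sub>m (dim_row (mat_inv G))"
    using Gc by (auto simp: inverts_mat_def)
  have "dim_col (mat_inv G) = p" using arg_cong[OF GGi, of dim_col] by simp
  moreover have "dim_row (mat_inv G) = p" using arg_cong[OF GiG, of dim_col] Gc by simp
  ultimately show "mat_inv (transpose_mat Ds * Ds) \<in> carrier_mat p p" unfolding G_def by auto
  show "(transpose_mat Ds * Ds) * mat_inv (transpose_mat Ds * Ds) = 1\<^sub>m p" using GGi unfolding G_def .
qed

lemma null_vec:
  fixes D :: "nat \<Rightarrow> nat \<Rightarrow> real"
  assumes LN: "L < N"
  shows "\<exists>v. (\<exists>l0<N. v l0 \<noteq> 0) \<and> (\<forall>j<L. (\<Sum>l<N. D j l * v l) = 0)"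
proof -
  define A where "A = mat N N (\<lambda>(j, l). if j < L then D j l else 0)"
  have Ac: "A \<in> carrier_mat N N" unfolding A_def by simp
  have ATc: "transpose_mat A \<in> carrier_mat N N" using Ac by simp
  have "transpose_mat A *\<^sub>v unit_vec N L = 0\<^sub>v N"
  proof (rule eq_vecI)
    fix l assume "l < dim_vec (0\<^sub>v N :: real vec)"
    then have l: "l < N" by simp
    have "(transpose_mat A *\<^sub>v unit_vec N L) $ l = col A l \<bullet> unit_vec N L" using Ac l by simp
    also have "\<dots> = (col A l) $ L" using Ac LN l by (simp add: scalar_prod_right_unit)
    also have "\<dots> = 0" using LN l by (simp add: A_def)
    finally show "(transpose_mat A *\<^sub>v unit_vec N L) $ l = 0\<^sub>v N $ l" using l by simp
  qed (use Ac in simp)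
  moreover have "unit_vec N L \<noteq> (0\<^sub>v N :: real vec)"
  proof
    assume "unit_vec N L = (0\<^sub>v N :: real vec)"
    then have "unit_vec N L $ L = (0\<^sub>v N :: real vec) $ L" by simp
    then show False using LN by simp
  qed
  ultimately have "Determinant.det (transpose_mat A) = 0"
    using det_0_iff_vec_prod_zero[OF ATc] LN by (auto intro!: exI[of _ "unit_vec N L"])
  then have "Determinant.det A = 0" using det_transpose[OF Ac] by simp
  then obtain c where c: "c \<in> carrier_vec N" "c \<noteq> 0\<^sub>v N" "A *\<^sub>v c = 0\<^sub>v N"
    using det_0_iff_vec_prod_zero[OF Ac] by blast
  obtain l0 where l0: "l0 < N" "c $ l0 \<noteq> 0"
    using c(1,2) by (metis eq_vecI carrier_vecD index_zero_vec(1) index_zero_vec(2))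
  have "(\<Sum>l<N. D j l * c $ l) = 0" if j: "j < L" for j
  proof -
    have "(A *\<^sub>v c) $ j = 0" using c(3) j LN by simp
    then show ?thesis using j LN c(1) Ac by (simp add: A_def scalar_prod_def atLeast0LessThan)
  qed
  then show ?thesis using l0 by (intro exI[of _ "\<lambda>l. c $ l"]) auto
qed

lemma obs_Q: "\<sigma> > 0 \<Longrightarrow> obs L N D \<sigma> x = GQ L \<sigma> (matvec L N D x)"
  unfolding obs_def by (rule noise_shift)

lemma matvec_lin: "j < L \<Longrightarrow> matvec L N D (\<lambda>i. x i + \<alpha> * v i) j = matvec L N D x j + \<alpha> * matvec L N D v j"
  unfolding matvec_def by (simp add: distrib_left sum.distrib sum_distrib_left algebra_simps)

lemma obs_shift: assumes sp: "\<sigma> > 0"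
  shows "obs L N D \<sigma> (\<lambda>i. x i + \<alpha> * v i) = GQ L \<sigma> (\<lambda>j. matvec L N D x j + \<alpha> * matvec L N D v j)"
  unfolding obs_Q[OF sp] by (rule Q_cong) (rule matvec_lin)

lemma unb_deriv:
  assumes sp: "\<sigma> > 0" and est: "estimator L N xh" and fv: "finite_var L N D \<sigma> xh x" and l: "l < N"
    and dv: "((\<lambda>\<alpha>. bias L N D \<sigma> xh (\<lambda>i. x i + \<alpha> * v i) l) has_real_derivative 0) (at 0)"
  shows "(\<integral>y. xh y l * gtt L \<sigma> (matvec L N D x) (matvec L N D v) y \<partial>GQ L \<sigma> (matvec L N D x)) = v l"
proof -
  define m0 where "m0 = matvec L N D x"
  define u where "u = matvec L N D v"
  have fm: "(\<lambda>y. xh y l) \<in> borel_measurable (obs_space L)" using est l unfolding estimator_def by auto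
  have f2: "integrable (GQ L \<sigma> m0) (\<lambda>y. (xh y l)\<^sup>2)"
    using fv l unfolding finite_var_def obs_Q[OF sp] m0_def by auto
  have dG: "((\<lambda>\<alpha>. \<integral>y. xh y l \<partial>GQ L \<sigma> (\<lambda>j. m0 j + \<alpha> * u j)) has_real_derivative
            (\<integral>y. xh y l * gtt L \<sigma> m0 u y \<partial>GQ L \<sigma> m0)) (at 0)"
    by (rule deriv_main[OF sp fm f2])
  have eqb: "(\<lambda>\<alpha>. bias L N D \<sigma> xh (\<lambda>i. x i + \<alpha> * v i) l)
      = (\<lambda>\<alpha>. (\<integral>y. xh y l \<partial>GQ L \<sigma> (\<lambda>j. m0 j + \<alpha> * u j)) - (x l + \<alpha> * v l))"
    unfolding bias_def m0_def u_def by (simp add: obs_shift[OF sp])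
  have dlin: "((\<lambda>\<alpha>. x l + \<alpha> * v l) has_real_derivative v l) (at 0)"
    by (auto intro!: derivative_eq_intros)
  have "((\<lambda>\<alpha>. bias L N D \<sigma> xh (\<lambda>i. x i + \<alpha> * v i) l) has_real_derivative
          (\<integral>y. xh y l * gtt L \<sigma> m0 u y \<partial>GQ L \<sigma> m0) - v l) (at 0)"
    unfolding eqb by (rule DERIV_diff[OF dG dlin])
  then have "(\<integral>y. xh y l * gtt L \<sigma> m0 u y \<partial>GQ L \<sigma> m0) - v l = 0" using dv DERIV_unique by blast
  then show ?thesis unfolding m0_def u_def by simp
qed

lemma matvec_ee: assumes "j < L" "l < N" shows "matvec L N D (gee l) j = D j l"
proof -
  have "(\<Sum>i<N. D j i * gee l i) = (\<Sum>i<N. if i = l then D j i else 0)"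
    by (intro sum.cong) (simp_all add: gee_def)
  then show ?thesis using assms by (simp add: matvec_def)
qed

lemma xz_int:
  assumes sp: "\<sigma> > 0" and est: "estimator L N xh" and fv: "finite_var L N D \<sigma> xh x" and m: "m < N" and j: "j < L"
  shows "integrable (GQ L \<sigma> (matvec L N D x)) (\<lambda>y. xh y m * (y j - matvec L N D x j))"
proof (rule prod_int)
  show "integrable (GQ L \<sigma> (matvec L N D x)) (\<lambda>y. (xh y m)\<^sup>2)"
    using fv m unfolding finite_var_def obs_Q[OF sp] by auto
  show "integrable (GQ L \<sigma> (matvec L N D x)) (\<lambda>y. (y j - matvec L N D x j)\<^sup>2)" by (rule z_sq_int[OF sp j])
  show "(\<lambda>y. xh y m) \<in> borel_measurable (GQ L \<sigma> (matvec L N D x))"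
    using est m unfolding estimator_def meas_Q by auto
  show "(\<lambda>y. y j - matvec L N D x j) \<in> borel_measurable (GQ L \<sigma> (matvec L N D x))"
    unfolding meas_Q by (rule z_meas[OF j])
qed

lemma B_rel:
  assumes sp: "\<sigma> > 0" and est: "estimator L N xh" and fv: "finite_var L N D \<sigma> xh x"
    and l: "l < N" and m: "m < N"
    and dv: "((\<lambda>\<alpha>. bias L N D \<sigma> xh (\<lambda>i. x i + \<alpha> * gee l i) m) has_real_derivative 0) (at 0)"
  shows "(\<Sum>j<L. D j l * (\<integral>y. xh y m * (y j - matvec L N D x j) \<partial>GQ L \<sigma> (matvec L N D x))) = \<sigma>\<^sup>2 * gee l m"
proof -
  define m0 where "m0 = matvec L N D x"
  define P where "P = GQ L \<sigma> m0"
  have u: "gtt L \<sigma> m0 (matvec L N D (gee l)) y = (\<Sum>j<L. D j l * (y j - m0 j)) / \<sigma>\<^sup>2" for y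
  proof -
    have "(\<Sum>j<L. matvec L N D (gee l) j * (y j - m0 j)) = (\<Sum>j<L. D j l * (y j - m0 j))"
      by (intro sum.cong refl) (simp add: matvec_ee l)
    then show ?thesis unfolding gtt_def by simp
  qed
  have ij: "integrable P (\<lambda>y. xh y m * (y j - m0 j))" if "j < L" for j
    unfolding P_def m0_def by (rule xz_int[OF sp est fv m that])
  have "gee l m = (\<integral>y. xh y m * gtt L \<sigma> m0 (matvec L N D (gee l)) y \<partial>P)"
    using unb_deriv[OF sp est fv m dv] unfolding P_def m0_def by simp
  also have "\<dots> = (\<integral>y. (\<Sum>j<L. D j l * (xh y m * (y j - m0 j))) / \<sigma>\<^sup>2 \<partial>P)"
    unfolding u by (intro Bochner_Integration.integral_cong) (simp_all add: sum_distrib_left algebra_simps)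
  also have "\<dots> = (\<Sum>j<L. D j l * (\<integral>y. xh y m * (y j - m0 j) \<partial>P)) / \<sigma>\<^sup>2"
    using ij by (simp add: Bochner_Integration.integral_sum integrable_mult_right)
  finally show ?thesis using sp unfolding P_def m0_def by (simp add: field_simps)
qed

lemma bsupp_fin: "finite (bsupp M d v)"
  unfolding bsupp_def by (rule finite_subset[of _ "{..<M}"]) auto

lemma bsupp_ee: assumes d: "d > 0"
  shows "bsupp M d (\<lambda>i. x i + \<alpha> * gee l i) \<subseteq> insert (l div d) (bsupp M d x)"
proof
  fix i assume "i \<in> bsupp M d (\<lambda>i. x i + \<alpha> * gee l i)"
  then obtain j where ij: "i < M" "j < d" "x (i * d + j) + \<alpha> * gee l (i * d + j) \<noteq> 0"
    unfolding bsupp_def by auto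
  show "i \<in> insert (l div d) (bsupp M d x)"
  proof (cases "i * d + j = l")
    case True
    then have "l div d = i" using ij(2) d by auto
    then show ?thesis by simp
  next
    case False
    then have "x (i * d + j) \<noteq> 0" using ij(3) by (simp add: gee_def)
    then show ?thesis using ij(1,2) unfolding bsupp_def by auto
  qed
qed

lemma feas_ee:
  assumes d: "d > 0" and xin: "x \<in> Xset M d k" and l: "l < M * d"
    and c: "l div d \<in> bsupp M d x \<or> card (bsupp M d x) < k"
  shows "feasible_dir M d k x (gee l)"
  unfolding feasible_dir_def
proof (intro conjI exI[of _ 1] allI impI)
  show "gee l \<in> vecs (M * d)" using l by (auto simp: vecs_def gee_def)
  show "(1::real) > 0" by simp
  fix \<alpha> :: real
  have xv: "x \<in> vecs (M * d)" and xc: "card (bsupp M d x) \<le> k" using xin unfolding Xset_def by auto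
  have "(\<lambda>i. x i + \<alpha> * gee l i) \<in> vecs (M * d)" using xv l by (auto simp: vecs_def gee_def)
  moreover have "card (bsupp M d (\<lambda>i. x i + \<alpha> * gee l i)) \<le> k"
  proof -
    have "card (bsupp M d (\<lambda>i. x i + \<alpha> * gee l i)) \<le> card (insert (l div d) (bsupp M d x))"
      by (rule card_mono[OF _ bsupp_ee[OF d]]) (simp add: bsupp_fin)
    also have "\<dots> \<le> k"
      using c xc by (auto simp: card_insert_if bsupp_fin)
    finally show ?thesis .
  qed
  ultimately show "(\<lambda>l'. x l' + \<alpha> * gee l l') \<in> Xset M d k" unfolding Xset_def by auto
qed

lemma quad:
  fixes X :: "'a \<Rightarrow> real" and Z :: "nat \<Rightarrow> 'a \<Rightarrow> real"
  assumes iX: "integrable M (\<lambda>y. (X y)\<^sup>2)"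
    and iXZ: "\<And>j. j < L \<Longrightarrow> integrable M (\<lambda>y. X y * Z j y)"
    and iZZ: "\<And>j k. j < L \<Longrightarrow> k < L \<Longrightarrow> integrable M (\<lambda>y. Z j y * Z k y)"
  shows "2 * (\<Sum>j<L. r j * (\<integral>y. X y * Z j y \<partial>M))
           - (\<Sum>j<L. \<Sum>k<L. r j * r k * (\<integral>y. Z j y * Z k y \<partial>M)) \<le> (\<integral>y. (X y)\<^sup>2 \<partial>M)"
proof -
  have i1: "integrable M (\<lambda>y. \<Sum>j<L. r j * (X y * Z j y))"
    using iXZ by (intro Bochner_Integration.integrable_sum integrable_mult_right) auto
  have i2: "integrable M (\<lambda>y. \<Sum>j<L. \<Sum>k<L. r j * r k * (Z j y * Z k y))"
    using iZZ by (intro Bochner_Integration.integrable_sum integrable_mult_right) auto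
  have pw: "(X y - (\<Sum>j<L. r j * Z j y))\<^sup>2
      = ((X y)\<^sup>2 - 2 * (\<Sum>j<L. r j * (X y * Z j y))) + (\<Sum>j<L. \<Sum>k<L. r j * r k * (Z j y * Z k y))" for y
  proof -
    have a: "(\<Sum>j<L. r j * Z j y)\<^sup>2 = (\<Sum>j<L. \<Sum>k<L. r j * r k * (Z j y * Z k y))"
      unfolding power2_eq_square sum_product by (simp add: algebra_simps)
    have b: "X y * (\<Sum>j<L. r j * Z j y) = (\<Sum>j<L. r j * (X y * Z j y))"
      by (simp add: sum_distrib_left algebra_simps)
    show ?thesis unfolding power2_diff a b[symmetric] by simp
  qed
  have "0 \<le> (\<integral>y. (X y - (\<Sum>j<L. r j * Z j y))\<^sup>2 \<partial>M)" by (rule Bochner_Integration.integral_nonneg) simp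
  also have "\<dots> = (\<integral>y. ((X y)\<^sup>2 - 2 * (\<Sum>j<L. r j * (X y * Z j y))) + (\<Sum>j<L. \<Sum>k<L. r j * r k * (Z j y * Z k y)) \<partial>M)"
    unfolding pw ..
  also have "\<dots> = (\<integral>y. (X y)\<^sup>2 \<partial>M) - 2 * (\<integral>y. (\<Sum>j<L. r j * (X y * Z j y)) \<partial>M)
      + (\<integral>y. (\<Sum>j<L. \<Sum>k<L. r j * r k * (Z j y * Z k y)) \<partial>M)"
    using iX i1 i2 by simp
  also have "(\<integral>y. (\<Sum>j<L. r j * (X y * Z j y)) \<partial>M) = (\<Sum>j<L. r j * (\<integral>y. X y * Z j y \<partial>M))"
    using iXZ by (simp add: Bochner_Integration.integral_sum integrable_mult_right)
  also have "(\<integral>y. (\<Sum>j<L. \<Sum>k<L. r j * r k * (Z j y * Z k y)) \<partial>M) = (\<Sum>j<L. \<Sum>k<L. r j * r k * (\<integral>y. Z j y * Z k y \<partial>M))"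
  proof -
    have "(\<integral>y. (\<Sum>j<L. \<Sum>k<L. r j * r k * (Z j y * Z k y)) \<partial>M) = (\<Sum>j<L. \<integral>y. (\<Sum>k<L. r j * r k * (Z j y * Z k y)) \<partial>M)"
      by (rule Bochner_Integration.integral_sum) (use iZZ in \<open>auto intro!: Bochner_Integration.integrable_sum integrable_mult_right\<close>)
    also have "\<dots> = (\<Sum>j<L. \<Sum>k<L. \<integral>y. r j * r k * (Z j y * Z k y) \<partial>M)"
      by (intro sum.cong refl Bochner_Integration.integral_sum) (use iZZ in \<open>auto intro!: integrable_mult_right\<close>)
    also have "\<dots> = (\<Sum>j<L. \<Sum>k<L. r j * r k * (\<integral>y. Z j y * Z k y \<partial>M))" by simp
    finally show ?thesis .
  qed
  finally show ?thesis by simp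
qed

lemma sq_diff_le: "(a - c)\<^sup>2 \<le> 2 * a\<^sup>2 + 2 * (c::real)\<^sup>2"
proof -
  have e: "(a - c)\<^sup>2 = 2 * a\<^sup>2 + 2 * c\<^sup>2 - (a + c)\<^sup>2" by (simp add: power2_eq_square algebra_simps)
  show ?thesis using e zero_le_power2[of "a + c"] by linarith
qed

lemma dev_sq_int:
  assumes "integrable M (\<lambda>y. (f y)\<^sup>2)" "f \<in> borel_measurable M" "finite_measure M"
  shows "integrable M (\<lambda>y. (f y - (c::real))\<^sup>2)"
proof (rule Bochner_Integration.integrable_bound[where f="\<lambda>y. 2 * (f y)\<^sup>2 + 2 * c\<^sup>2"])
  interpret finite_measure M by fact
  show "integrable M (\<lambda>y. 2 * (f y)\<^sup>2 + 2 * c\<^sup>2)"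
    by (intro Bochner_Integration.integrable_add integrable_mult_right assms(1) integrable_const)
  show "AE y in M. norm ((f y - c)\<^sup>2) \<le> norm (2 * (f y)\<^sup>2 + 2 * c\<^sup>2)"
    by (intro AE_I2) (use sq_diff_le[of "f y" c for y] in simp)
qed (use assms(2) in measurable)

lemma sum_delta_gee: "(\<Sum>k<L. g k * gee k j) = (if j < L then g j else 0)"
proof -
  have "(\<Sum>k<L. g k * gee k j) = (\<Sum>k<L. if k = j then g k else 0)"
    by (intro sum.cong) (auto simp: gee_def)
  then show ?thesis by simp
qed

theorem theorem3:
  fixes L M d k :: nat and D :: "nat \<Rightarrow> nat \<Rightarrow> real" and \<sigma> :: real and x :: "nat \<Rightarrow> real"
  assumes d_pos: "d > 0" and M_pos: "M > 0"
    and sigma_pos: "\<sigma> > 0"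
    and L_lt_N: "L < M * d"
    and unit_cols: "\<forall>l<M * d. (\<Sum>j<L. (D j l)\<^sup>2) = 1"
    and rank: "\<forall>I. I \<subseteq> {..<M} \<and> card I \<le> k \<longrightarrow> full_col_rank (subD L M d D I)"
    and x_in: "x \<in> Xset M d k"
  shows "(card (bsupp M d x) < k \<longrightarrow>
            (\<forall>xh. estimator L (M * d) xh \<and> finite_var L (M * d) D \<sigma> xh x \<longrightarrow>
                   \<not> X_unbiased L M d k D \<sigma> xh x))
       \<and> (card (bsupp M d x) = k \<longrightarrow>
            (\<forall>xh. estimator L (M * d) xh \<and> finite_var L (M * d) D \<sigma> xh x \<and> X_unbiased L M d k D \<sigma> xh x \<longrightarrow>
                   MSE L (M * d) D \<sigma> xh x \<ge>
                     \<sigma>\<^sup>2 * mat_trace (mat_inv (transpose_mat (subD L M d D (bsupp M d x)) * subD L M d D (bsupp M d x)))))"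
proof (intro conjI impI allI)
  define N where "N = M * d"
  define m0 where "m0 = matvec L N D x"
  define P where "P = GQ L \<sigma> m0"
  define B where "B xh m j = (\<integral>y. xh y m * (y j - m0 j) \<partial>P)" for xh :: "(nat \<Rightarrow> real) \<Rightarrow> nat \<Rightarrow> real" and m j
  have sp: "\<sigma> > 0" by (rule sigma_pos)
  have s2: "\<sigma>\<^sup>2 > 0" using sp by simp
  have relB: "(\<Sum>j<L. D j l * B xh m j) = \<sigma>\<^sup>2 * gee l m"
    if est: "estimator L (M * d) xh" and fv: "finite_var L (M * d) D \<sigma> xh x"
      and U: "X_unbiased L M d k D \<sigma> xh x" and l: "l < M * d" and m: "m < M * d"
      and c: "l div d \<in> bsupp M d x \<or> card (bsupp M d x) < k" for xh l m
  proof -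
    have "feasible_dir M d k x (gee l)" by (rule feas_ee[OF d_pos x_in l c])
    then have dv: "((\<lambda>\<alpha>. bias L (M * d) D \<sigma> xh (\<lambda>i. x i + \<alpha> * gee l i) m) has_real_derivative 0) (at 0)"
      using U m unfolding X_unbiased_def by blast
    show ?thesis using B_rel[OF sp est fv l m dv] unfolding B_def P_def m0_def N_def .
  qed
  {
    fix xh assume s: "card (bsupp M d x) < k"
      and h: "estimator L (M * d) xh \<and> finite_var L (M * d) D \<sigma> xh x"
    show "\<not> X_unbiased L M d k D \<sigma> xh x"
    proof
      assume U: "X_unbiased L M d k D \<sigma> xh x"
      obtain v where v: "\<exists>l0<M * d. v l0 \<noteq> 0" "\<forall>j<L. (\<Sum>l<M * d. D j l * v l) = 0"
        using null_vec[OF L_lt_N, of D] by blast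
      obtain l0 where l0: "l0 < M * d" "v l0 \<noteq> 0" using v(1) by blast
      have "(\<Sum>l<M * d. v l * (\<sigma>\<^sup>2 * gee l l0)) = (\<Sum>l<M * d. (v l * \<sigma>\<^sup>2) * gee l l0)"
        by (simp only: mult.assoc)
      also have "\<dots> = v l0 * \<sigma>\<^sup>2" using sum_delta_gee[where g="\<lambda>l. v l * \<sigma>\<^sup>2" and L="M * d" and j=l0] l0(1) by simp
      finally have "\<sigma>\<^sup>2 * v l0 = (\<Sum>l<M * d. v l * (\<sigma>\<^sup>2 * gee l l0))" by simp
      also have "\<dots> = (\<Sum>l<M * d. v l * (\<Sum>j<L. D j l * B xh l0 j))"
        using relB[OF conjunct1[OF h] conjunct2[OF h] U _ l0(1)] s by (intro sum.cong) auto
      also have "\<dots> = (\<Sum>j<L. B xh l0 j * (\<Sum>l<M * d. D j l * v l))"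
        by (simp add: sum_distrib_left sum.swap[of _ "{..<L}"] algebra_simps)
      also have "\<dots> = 0" using v(2) by simp
      finally show False using s2 l0(2) by simp
    qed
  }
  fix xh assume s: "card (bsupp M d x) = k"
    and h: "estimator L (M * d) xh \<and> finite_var L (M * d) D \<sigma> xh x \<and> X_unbiased L M d k D \<sigma> xh x"
  have est: "estimator L (M * d) xh" and fv: "finite_var L (M * d) D \<sigma> xh x"
    and U: "X_unbiased L M d k D \<sigma> xh x" using h by auto
  define S where "S = bsupp M d x"
  define cs where "cs = block_cols M d S"
  define p where "p = length cs"
  define Ds where "Ds = subD L M d D S"
  define Gi where "Gi = mat_inv (transpose_mat Ds * Ds)"
  have Ds_eq: "Ds = mat L p (\<lambda>(j, c). D j (cs ! c))"
    unfolding Ds_def subD_def cs_def p_def Let_def ..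
  have Dsc: "Ds \<in> carrier_mat L p" unfolding Ds_eq by simp
  have Dse: "Ds $$ (j, a) = D j (cs ! a)" if "j < L" "a < p" for j a
    unfolding Ds_eq using that by simp
  have Ssub: "bsupp M d x \<subseteq> {..<M}" by (auto simp: bsupp_def)
  have Scard: "card (bsupp M d x) \<le> k" using s by simp
  have fr: "full_col_rank Ds"
    unfolding Ds_def S_def by (rule rank[rule_format, OF conjI[OF Ssub Scard]])
  have Gic: "Gi \<in> carrier_mat p p" and GGi: "(transpose_mat Ds * Ds) * Gi = 1\<^sub>m p"
    using gram_inv[OF Dsc fr] unfolding Gi_def by auto
  have gram: "(\<Sum>b<p. (\<Sum>j<L. D j (cs ! a) * D j (cs ! b)) * Gi $$ (b, i)) = (if a = i then 1 else 0)"
    if a: "a < p" and i: "i < p" for a i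
  proof -
    have "((transpose_mat Ds * Ds) * Gi) $$ (a, i) = (if a = i then 1 else 0)"
      unfolding GGi using a i by simp
    moreover have "((transpose_mat Ds * Ds) * Gi) $$ (a, i) = (\<Sum>b<p. (transpose_mat Ds * Ds) $$ (a, b) * Gi $$ (b, i))"
    proof -
      define G where "G = transpose_mat Ds * Ds"
      have Gc: "G \<in> carrier_mat p p" unfolding G_def using Dsc by auto
      have "(G * Gi) $$ (a, i) = (\<Sum>b<p. G $$ (a, b) * Gi $$ (b, i))"
        using a i Gic Gc by (simp add: scalar_prod_def atLeast0LessThan)
      then show ?thesis unfolding G_def .
    qed
    moreover have "(transpose_mat Ds * Ds) $$ (a, b) = (\<Sum>j<L. D j (cs ! a) * D j (cs ! b))" if "b < p" for b
      using gram_entry[OF Dsc a that] Dse a that by simp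
    ultimately show ?thesis by simp
  qed
  have dcs: "distinct cs" unfolding cs_def block_cols_def by simp
  have setcs: "set cs = {l. l < M * d \<and> l div d \<in> S}" unfolding cs_def block_cols_def by auto
  have csN: "cs ! i < M * d" and csS: "cs ! i div d \<in> S" if "i < p" for i
    using nth_mem[of i cs] that setcs unfolding p_def by auto
  have relcs: "(\<Sum>j<L. D j (cs ! b) * B xh m j) = \<sigma>\<^sup>2 * gee (cs ! b) m" if "b < p" "m < M * d" for b m
    using relB[OF est fv U csN[OF that(1)] that(2)] csS[OF that(1)] unfolding S_def by blast
  have xhm: "(\<lambda>y. xh y m) \<in> borel_measurable P" if "m < M * d" for m
    using est that unfolding estimator_def P_def meas_Q by auto
  have xh2: "integrable P (\<lambda>y. (xh y m)\<^sup>2)" if "m < M * d" for m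
    using fv that unfolding finite_var_def obs_Q[OF sp] P_def m0_def N_def by auto
  have Pfin: "finite_measure P" unfolding P_def using Q_prob[OF sp] by (simp add: prob_space_def)
  have Ei: "\<sigma>\<^sup>2 * Gi $$ (i, i) \<le> (\<integral>y. (xh y (cs ! i) - x (cs ! i))\<^sup>2 \<partial>P)" if i: "i < p" for i
  proof -
    define m where "m = cs ! i"
    have m: "m < M * d" unfolding m_def by (rule csN[OF i])
    define c where "c b = Gi $$ (b, i)" for b
    define r where "r j = (\<Sum>b<p. c b * D j (cs ! b))" for j
    define X where "X y = xh y m - x m" for y
    define Z where "Z j y = y j - m0 j" for j y
    have iX: "integrable P (\<lambda>y. (X y)\<^sup>2)"
      unfolding X_def by (rule dev_sq_int[OF xh2[OF m] xhm[OF m] Pfin])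
    have Xm: "X \<in> borel_measurable P" unfolding X_def using xhm[OF m] by measurable
    have Zm: "Z j \<in> borel_measurable P" if "j < L" for j
      unfolding Z_def P_def meas_Q by (rule z_meas[OF that])
    have iZ2: "integrable P (\<lambda>y. (Z j y)\<^sup>2)" if "j < L" for j
      unfolding Z_def P_def by (rule z_sq_int[OF sp that])
    have iXZ: "integrable P (\<lambda>y. X y * Z j y)" if "j < L" for j
      by (rule prod_int[OF iX iZ2[OF that] Xm Zm[OF that]])
    have iZZ: "integrable P (\<lambda>y. Z j y * Z k y)" if "j < L" "k < L" for j k
      by (rule prod_int[OF iZ2[OF that(1)] iZ2[OF that(2)] Zm[OF that(1)] Zm[OF that(2)]])
    have vXZ: "(\<integral>y. X y * Z j y \<partial>P) = B xh m j" if j: "j < L" for j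
    proof -
      have "(\<integral>y. X y * Z j y \<partial>P) = (\<integral>y. xh y m * (y j - m0 j) - x m * (y j - m0 j) \<partial>P)"
        unfolding X_def Z_def by (simp add: algebra_simps)
      also have "\<dots> = B xh m j - x m * (\<integral>y. y j - m0 j \<partial>P)"
        unfolding B_def
        by (subst Bochner_Integration.integral_diff)
           (use xz_int[OF sp est fv m j] z_int[OF sp j] in \<open>auto simp: P_def m0_def N_def\<close>)
      also have "(\<integral>y. y j - m0 j \<partial>P) = 0" unfolding P_def by (rule z_mean[OF sp j])
      finally show ?thesis by simp
    qed
    have vZZ: "(\<integral>y. Z j y * Z k y \<partial>P) = \<sigma>\<^sup>2 * gee k j" if "j < L" "k < L" for j k
      unfolding Z_def P_def by (rule z_cov[OF sp that])
    have q: "2 * (\<Sum>j<L. r j * (\<integral>y. X y * Z j y \<partial>P))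
           - (\<Sum>j<L. \<Sum>k<L. r j * r k * (\<integral>y. Z j y * Z k y \<partial>P)) \<le> (\<integral>y. (X y)\<^sup>2 \<partial>P)"
      by (rule quad[OF iX iXZ iZZ])
    have c1: "(\<Sum>j<L. r j * (\<integral>y. X y * Z j y \<partial>P)) = \<sigma>\<^sup>2 * c i"
    proof -
      have "(\<Sum>j<L. r j * (\<integral>y. X y * Z j y \<partial>P)) = (\<Sum>j<L. r j * B xh m j)"
        by (intro sum.cong refl) (simp add: vXZ)
      also have "\<dots> = (\<Sum>b<p. c b * (\<Sum>j<L. D j (cs ! b) * B xh m j))"
        unfolding r_def by (simp add: sum_distrib_left sum_distrib_right sum.swap[of _ "{..<L}"] algebra_simps)
      also have "\<dots> = (\<Sum>b<p. c b * (\<sigma>\<^sup>2 * gee (cs ! b) m))"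
        using relcs m by (intro sum.cong refl) auto
      also have "\<dots> = (\<Sum>b<p. (c b * \<sigma>\<^sup>2) * gee b i)"
      proof (intro sum.cong refl)
        fix b assume "b \<in> {..<p}"
        then have "gee (cs ! b) m = gee b i"
          using i dcs unfolding m_def gee_def p_def by (simp add: nth_eq_iff_index_eq)
        then show "c b * (\<sigma>\<^sup>2 * gee (cs ! b) m) = (c b * \<sigma>\<^sup>2) * gee b i" by simp
      qed
      also have "\<dots> = \<sigma>\<^sup>2 * c i" using sum_delta_gee[where g="\<lambda>b. c b * \<sigma>\<^sup>2" and L=p and j=i] i by simp
      finally show ?thesis .
    qed
    have c2: "(\<Sum>j<L. \<Sum>k<L. r j * r k * (\<integral>y. Z j y * Z k y \<partial>P)) = \<sigma>\<^sup>2 * c i"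
    proof -
      have "(\<Sum>j<L. \<Sum>k<L. r j * r k * (\<integral>y. Z j y * Z k y \<partial>P)) = (\<Sum>j<L. \<Sum>k<L. (r j * \<sigma>\<^sup>2 * r k) * gee k j)"
        by (intro sum.cong refl) (simp add: vZZ)
      also have "\<dots> = (\<Sum>j<L. r j * \<sigma>\<^sup>2 * r j)"
        by (intro sum.cong refl) (simp add: sum_delta_gee[of "\<lambda>k. r _ * \<sigma>\<^sup>2 * r k"])
      also have "\<dots> = \<sigma>\<^sup>2 * (\<Sum>j<L. r j * r j)" by (simp add: sum_distrib_left algebra_simps)
      also have "(\<Sum>j<L. r j * r j) = (\<Sum>a<p. c a * (\<Sum>b<p. (\<Sum>j<L. D j (cs ! a) * D j (cs ! b)) * c b))"
        unfolding r_def sum_product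
        by (simp add: sum_distrib_left sum_distrib_right sum.swap[of _ "{..<L}"] algebra_simps)
      also have "\<dots> = (\<Sum>a<p. c a * gee a i)"
        using gram i unfolding c_def gee_def by (intro sum.cong refl) auto
      also have "\<dots> = c i" using sum_delta_gee[where g=c and L=p and j=i] i by simp
      finally show ?thesis .
    qed
    have "\<sigma>\<^sup>2 * c i \<le> (\<integral>y. (X y)\<^sup>2 \<partial>P)" using q unfolding c1 c2 by (simp add: mult.commute)
    then show ?thesis unfolding c_def X_def m_def .
  qed
  define E where "E l = (\<integral>y. (xh y l - x l)\<^sup>2 \<partial>P)" for l
  have E0: "0 \<le> E l" for l unfolding E_def by (rule Bochner_Integration.integral_nonneg) simp
  have "MSE L (M * d) D \<sigma> xh x = (\<integral>y. (\<Sum>l<M * d. (xh y l - x l)\<^sup>2) \<partial>P)"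
    unfolding MSE_def obs_Q[OF sp] P_def m0_def N_def ..
  also have "\<dots> = (\<Sum>l<M * d. E l)"
    unfolding E_def
    by (rule Bochner_Integration.integral_sum) (rule dev_sq_int[OF xh2 xhm Pfin], auto)
  finally have mse: "MSE L (M * d) D \<sigma> xh x = (\<Sum>l<M * d. E l)" .
  have "(\<Sum>l\<in>set cs. E l) \<le> (\<Sum>l<M * d. E l)"
    by (rule sum_mono2) (use setcs E0 in auto)
  moreover have "(\<Sum>l\<in>set cs. E l) = (\<Sum>i<p. E (cs ! i))"
    by (rule sum.reindex_bij_betw[symmetric]) (rule bij_betw_nth[OF dcs], simp_all add: p_def)
  moreover have "(\<Sum>i<p. \<sigma>\<^sup>2 * Gi $$ (i, i)) \<le> (\<Sum>i<p. E (cs ! i))"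
    by (rule sum_mono) (use Ei in \<open>auto simp: E_def\<close>)
  moreover have "mat_trace Gi = (\<Sum>i<p. Gi $$ (i, i))" unfolding mat_trace_def using Gic by simp
  ultimately have "\<sigma>\<^sup>2 * mat_trace Gi \<le> MSE L (M * d) D \<sigma> xh x"
    unfolding mse by (simp add: sum_distrib_left)
  then show "MSE L (M * d) D \<sigma> xh x \<ge>
      \<sigma>\<^sup>2 * mat_trace (mat_inv (transpose_mat (subD L M d D (bsupp M d x)) * subD L M d D (bsupp M d x)))"
    unfolding Gi_def Ds_def S_def by simp
qed

end
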